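(* Fix $p\in[1,\infty)$. Let $M=(X,K,\phi)$ and $N=(Y,L,\psi)$ be objects of $\mathsf{SMT}$, and let $M\prod N=(X\times Y,\,K\times L,\,\phi\times\psi)$ be their product in $\mathsf{SMT}$. Then the metric realizations satisfy a homotopy equivalence $$|M|\times|N|\;\simeq\;|M\textstyle\prod N|,$$ where $|M|\times|N|$ carries the product (maximum) metric.
   Context: $\mathsf{SMT}$ is the category whose objects are triples $(X,K,\phi)$ with $X$ a metric space, $K$ an abstract simplicial complex (vertex set $K^0$, family of nonempty finite subsets containing all singletons and closed under nonempty subsets) and $\phi\colon X\to K^0$ a bijection, and whose morphisms $(X,K,\phi)\to(Y,L,\psi)$ are pairs $(f,g)$ with $f$ a 1-Lipschitz map, $g$ a simplicial map and $\psi\circ f=g|_{K^0}\circ\phi$. The product $X\times Y$ of metric spaces carries the metric $d((x,y),(x',y'))=\max\{d(x,x'),d(y,y')\}$. The product $K\times L$ of simplicial complexes has vertex set $K^0\times L^0$, and a finite nonempty subset of $K^0\times L^0$ is a simplex iff its projection to $K^0$ is a simplex of $K$ and its projection to $L^0$ is a simplex of $L$. Metric realization: for an object $(X,K,\phi)$, $|(X,K,\phi)|$ is the set of finitely supported probability measures $\mu=\sum_{i=1}^n\lambda_i\delta_{x_i}$ on $X$ (distinct $x_i$, $\lambda_i>0$, $\sum\lambda_i=1$, $\delta_x$ the Dirac mass at $x$) such that $\phi(\mathrm{supp}\,\mu)=\phi(\{x_1,\dots,x_n\})$ is a simplex of $K$, equipped with the $p$-Wasserstein metric $W_p(\mu,\nu)=\inf_{\pi}\left(\int_{X\times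 X}d(x,y)^p\,d\pi(x,y)\right)^{1/p}$, the infimum over probability measures $\pi$ on $X\times X$ with marginals $\mu$ and $\nu$. *)

theory Defs
  imports "HOL-Analysis.Analysis"
begin

definition is_simplicial_complex :: "'v set \<Rightarrow> 'v set set \<Rightarrow> bool" where
  "is_simplicial_complex V K \<longleftrightarrow>
     (\<forall>\<sigma>\<in>K. \<sigma> \<noteq> {} \<and> finite \<sigma> \<and> \<sigma> \<subseteq> V) \<and>
     (\<forall>v\<in>V. {v} \<in> K) \<and>
     (\<forall>\<sigma>\<in>K. \<forall>\<tau>. \<tau> \<noteq> {} \<and> \<tau> \<subseteq> \<sigma> \<longrightarrow> \<tau> \<in> K)"

definition smt_obj :: "'a set \<Rightarrow> ('a \<Rightarrow> 'a \<Rightarrow> real) \<Rightarrow> 'v set \<Rightarrow> 'v set set \<Rightarrow> ('a \<Rightarrow> 'v) \<Rightarrow> bool" where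
  "smt_obj X d V K \<phi> \<longleftrightarrow> Metric_space X d \<and> is_simplicial_complex V K \<and> bij_betw \<phi> X V"

definition prod_sc :: "'v set set \<Rightarrow> 'w set set \<Rightarrow> ('v \<times> 'w) set set" where
  "prod_sc K L = {\<sigma>. \<sigma> \<noteq> {} \<and> finite \<sigma> \<and> fst ` \<sigma> \<in> K \<and> snd ` \<sigma> \<in> L}"

definition max_dist :: "('a \<Rightarrow> 'a \<Rightarrow> real) \<Rightarrow> ('b \<Rightarrow> 'b \<Rightarrow> real) \<Rightarrow> ('a \<times> 'b) \<Rightarrow> ('a \<times> 'b) \<Rightarrow> real" where
  "max_dist d e = (\<lambda>(x,y) (x',y'). max (d x x') (e y y'))"

text \<open>Finitely supported (probability) measures are represented by their mass functions.\<close>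
definition fsupp :: "('a \<Rightarrow> real) \<Rightarrow> 'a set" where
  "fsupp \<mu> = {x. \<mu> x \<noteq> 0}"

definition realization :: "'a set \<Rightarrow> 'v set set \<Rightarrow> ('a \<Rightarrow> 'v) \<Rightarrow> ('a \<Rightarrow> real) set" where
  "realization X K \<phi> = {\<mu>. finite (fsupp \<mu>) \<and> fsupp \<mu> \<subseteq> X \<and> (\<forall>x. 0 \<le> \<mu> x) \<and>
       sum \<mu> (fsupp \<mu>) = 1 \<and> \<phi> ` fsupp \<mu> \<in> K}"

text \<open>Couplings of two finitely supported probability measures (any coupling is
  supported on the finite set supp mu \<times> supp nu, hence finitely supported).\<close>
definition couplings :: "('a \<Rightarrow> real) \<Rightarrow> ('a \<Rightarrow> real) \<Rightarrow> ('a \<times> 'a \<Rightarrow> real) set" where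
  "couplings \<mu> \<nu> = {\<pi>. finite (fsupp \<pi>) \<and> (\<forall>z. 0 \<le> \<pi> z) \<and>
       (\<forall>x. (\<Sum>z\<in>fsupp \<pi> \<inter> {z. fst z = x}. \<pi> z) = \<mu> x) \<and>
       (\<forall>y. (\<Sum>z\<in>fsupp \<pi> \<inter> {z. snd z = y}. \<pi> z) = \<nu> y)}"

definition wasserstein :: "real \<Rightarrow> ('a \<Rightarrow> 'a \<Rightarrow> real) \<Rightarrow> ('a \<Rightarrow> real) \<Rightarrow> ('a \<Rightarrow> real) \<Rightarrow> real" where
  "wasserstein p d \<mu> \<nu> =
     (Inf {(\<Sum>z\<in>fsupp \<pi>. d (fst z) (snd z) powr p * \<pi> z) | \<pi>. \<pi> \<in> couplings \<mu> \<nu>}) powr (1 / p)"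

end

theory Submission
  imports Defs
begin


lemma fsupp_sum: "finite A \<Longrightarrow> fsupp \<mu> \<subseteq> A \<Longrightarrow> sum \<mu> A = sum \<mu> (fsupp \<mu>)"
  by (rule sum.mono_neutral_right) (auto simp: fsupp_def)

lemma fsupp_sum_gen: "finite A \<Longrightarrow> fsupp \<mu> \<subseteq> A \<Longrightarrow> (\<Sum>x\<in>A. f x * \<mu> x) = (\<Sum>x\<in>fsupp \<mu>. f x * \<mu> x)"
  by (rule sum.mono_neutral_right) (auto simp: fsupp_def)

lemma fiber_fst: 
  assumes "finite B" "fsupp \<gamma> \<subseteq> A \<times> B"
  shows "(\<Sum>z\<in>fsupp \<gamma> \<inter> {z. fst z = x}. \<gamma> z) = (\<Sum>y\<in>B. \<gamma> (x,y))"
proof -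
  have "(\<Sum>y\<in>B. \<gamma> (x,y)) = (\<Sum>z\<in>Pair x ` B. \<gamma> z)"
    by (subst sum.reindex) (auto simp: inj_on_def)
  also have "\<dots> = (\<Sum>z\<in>fsupp \<gamma> \<inter> {z. fst z = x}. \<gamma> z)"
    by (rule sum.mono_neutral_right) (use assms in \<open>auto simp: fsupp_def\<close>)
  finally show ?thesis by simp
qed

lemma fiber_snd: 
  assumes "finite A" "fsupp \<gamma> \<subseteq> A \<times> B"
  shows "(\<Sum>z\<in>fsupp \<gamma> \<inter> {z. snd z = y}. \<gamma> z) = (\<Sum>x\<in>A. \<gamma> (x,y))"
proof -
  have "(\<Sum>x\<in>A. \<gamma> (x,y)) = (\<Sum>z\<in>(\<lambda>x. (x,y)) ` A. \<gamma> z)"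
    by (subst sum.reindex) (auto simp: inj_on_def)
  also have "\<dots> = (\<Sum>z\<in>fsupp \<gamma> \<inter> {z. snd z = y}. \<gamma> z)"
    by (rule sum.mono_neutral_right) (use assms in \<open>auto simp: fsupp_def\<close>)
  finally show ?thesis by simp
qed

lemma couplings_box:
  assumes "finite A" "finite B" "fsupp \<gamma> \<subseteq> A \<times> B" "\<And>z. 0 \<le> \<gamma> z"
  shows "\<gamma> \<in> couplings \<mu> \<nu> \<longleftrightarrow> (\<forall>x. (\<Sum>y\<in>B. \<gamma> (x,y)) = \<mu> x) \<and> (\<forall>y. (\<Sum>x\<in>A. \<gamma> (x,y)) = \<nu> y)"
proof -
  have "finite (fsupp \<gamma>)" using assms finite_subset by blast
  then show ?thesis using assms fiber_fst[OF assms(2,3)] fiber_snd[OF assms(1,3)]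
    unfolding couplings_def by auto
qed

lemma couplings_supp:
  assumes "\<gamma> \<in> couplings \<mu> \<nu>"
  shows "fsupp \<gamma> \<subseteq> fsupp \<mu> \<times> fsupp \<nu>"
proof
  fix z assume z: "z \<in> fsupp \<gamma>"
  have fin: "finite (fsupp \<gamma>)" and nn: "\<And>z. 0 \<le> \<gamma> z" using assms by (auto simp: couplings_def)
  have pos: "\<gamma> z > 0" using z nn[of z] by (auto simp: fsupp_def)
  have "\<gamma> z \<le> (\<Sum>w\<in>fsupp \<gamma> \<inter> {w. fst w = fst z}. \<gamma> w)"
    by (rule member_le_sum) (use z fin nn in auto)
  also have "\<dots> = \<mu> (fst z)" using assms by (auto simp: couplings_def)
  finally have 1: "\<mu> (fst z) \<noteq> 0" using pos by auto
  have "\<gamma> z \<le> (\<Sum>w\<in>fsupp \<gamma> \<inter> {w. snd w = snd z}. \<gamma> w)"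
    by (rule member_le_sum) (use z fin nn in auto)
  also have "\<dots> = \<nu> (snd z)" using assms by (auto simp: couplings_def)
  finally have 2: "\<nu> (snd z) \<noteq> 0" using pos by auto
  show "z \<in> fsupp \<mu> \<times> fsupp \<nu>" using 1 2 by (cases z) (auto simp: fsupp_def)
qed

lemma couplings_nonneg: "\<gamma> \<in> couplings \<mu> \<nu> \<Longrightarrow> 0 \<le> \<gamma> z"
  unfolding couplings_def by blast

lemma couplings_S:
  assumes "finite S" "fsupp \<gamma> \<subseteq> S" "\<And>z. 0 \<le> \<gamma> z"
  shows "\<gamma> \<in> couplings \<mu> \<nu> \<longleftrightarrow> (\<forall>x. (\<Sum>z\<in>S \<inter> {z. fst z = x}. \<gamma> z) = \<mu> x) \<and> (\<forall>y. (\<Sum>z\<in>S \<inter> {z. snd z = y}. \<gamma> z) = \<nu> y)"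
proof -
  have "finite (fsupp \<gamma>)" using assms finite_subset by blast
  moreover have "(\<Sum>z\<in>S \<inter> {z. fst z = x}. \<gamma> z) = (\<Sum>z\<in>fsupp \<gamma> \<inter> {z. fst z = x}. \<gamma> z)" for x
    by (rule sum.mono_neutral_right) (use assms in \<open>auto simp: fsupp_def\<close>)
  moreover have "(\<Sum>z\<in>S \<inter> {z. snd z = x}. \<gamma> z) = (\<Sum>z\<in>fsupp \<gamma> \<inter> {z. snd z = x}. \<gamma> z)" for x
    by (rule sum.mono_neutral_right) (use assms in \<open>auto simp: fsupp_def\<close>)
  ultimately show ?thesis using assms unfolding couplings_def by auto
qed

definition wcost :: "real \<Rightarrow> ('a \<Rightarrow> 'a \<Rightarrow> real) \<Rightarrow> ('a \<times> 'a \<Rightarrow> real) \<Rightarrow> real" where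
  "wcost p c \<gamma> = (\<Sum>z\<in>fsupp \<gamma>. c (fst z) (snd z) powr p * \<gamma> z)"

definition IW :: "real \<Rightarrow> ('a \<Rightarrow> 'a \<Rightarrow> real) \<Rightarrow> ('a \<Rightarrow> real) \<Rightarrow> ('a \<Rightarrow> real) \<Rightarrow> real" where
  "IW p c \<mu> \<nu> = Inf {wcost p c \<pi> | \<pi>. \<pi> \<in> couplings \<mu> \<nu>}"

lemma wasserstein_IW: "wasserstein p c \<mu> \<nu> = IW p c \<mu> \<nu> powr (1/p)"
  unfolding wasserstein_def IW_def wcost_def by simp

lemma wcost_S: "finite S \<Longrightarrow> fsupp \<gamma> \<subseteq> S \<Longrightarrow> wcost p c \<gamma> = (\<Sum>z\<in>S. c (fst z) (snd z) powr p * \<gamma> z)"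
  unfolding wcost_def by (rule sum.mono_neutral_left) (auto simp: fsupp_def)

lemma wcost_box: "finite A \<Longrightarrow> finite B \<Longrightarrow> fsupp \<gamma> \<subseteq> A \<times> B \<Longrightarrow>
   wcost p c \<gamma> = (\<Sum>x\<in>A. \<Sum>y\<in>B. c x y powr p * \<gamma> (x,y))"
  by (subst wcost_S[of "A \<times> B"]) (auto simp: sum.cartesian_product case_prod_unfold)

lemma wcost_nonneg: "(\<And>z. 0 \<le> \<gamma> z) \<Longrightarrow> 0 \<le> wcost p c \<gamma>"
  unfolding wcost_def by (intro sum_nonneg mult_nonneg_nonneg) auto

lemma IW_le: 
  assumes "\<gamma> \<in> couplings \<mu> \<nu>" shows "IW p c \<mu> \<nu> \<le> wcost p c \<gamma>"
proof -
  have "bdd_below {wcost p c \<pi> | \<pi>. \<pi> \<in> couplings \<mu> \<nu>}"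
    by (rule bdd_belowI[of _ 0]) (auto intro: wcost_nonneg couplings_nonneg)
  then show ?thesis unfolding IW_def
    by (rule cInf_lower[rotated]) (use assms in auto)
qed

lemma IW_nonneg: "couplings \<mu> \<nu> \<noteq> {} \<Longrightarrow> 0 \<le> IW p c \<mu> \<nu>"
  unfolding IW_def
  by (rule cInf_greatest) (auto intro!: wcost_nonneg simp: couplings_def)

lemma IW_approx: "couplings \<mu> \<nu> \<noteq> {} \<Longrightarrow> IW p c \<mu> \<nu> < r \<Longrightarrow> \<exists>\<gamma>\<in>couplings \<mu> \<nu>. wcost p c \<gamma> < r"
  unfolding IW_def using cInf_lessD[of "{wcost p c \<pi> | \<pi>. \<pi> \<in> couplings \<mu> \<nu>}" r] by auto

lemma W_less_iff:
  assumes "couplings \<mu> \<nu> \<noteq> {}" "1 \<le> p" "0 < r"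
  shows "wasserstein p c \<mu> \<nu> < r \<longleftrightarrow> IW p c \<mu> \<nu> < r powr p"
proof -
  have I0: "0 \<le> IW p c \<mu> \<nu>" using IW_nonneg assms by blast
  have e1: "(r powr p) powr (1/p) = r" using assms by (simp add: powr_powr)
  have e2: "(IW p c \<mu> \<nu> powr (1/p)) powr p = IW p c \<mu> \<nu>" using assms I0 by (simp add: powr_powr)
  show ?thesis unfolding wasserstein_IW
  proof
    assume "IW p c \<mu> \<nu> powr (1 / p) < r"
    then have "(IW p c \<mu> \<nu> powr (1 / p)) powr p < r powr p"
      using powr_less_mono2[of p "IW p c \<mu> \<nu> powr (1 / p)" r] assms by auto
    then show "IW p c \<mu> \<nu> < r powr p" using e2 by simp
  next
    assume "IW p c \<mu> \<nu> < r powr p"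
    then have "IW p c \<mu> \<nu> powr (1/p) < (r powr p) powr (1/p)"
      using powr_less_mono2[of "1/p" "IW p c \<mu> \<nu>" "r powr p"] assms I0 by auto
    then show "IW p c \<mu> \<nu> powr (1 / p) < r" using e1 by simp
  qed
qed



definition pmeas :: "('c \<Rightarrow> real) \<Rightarrow> bool" where
  "pmeas \<mu> \<longleftrightarrow> finite (fsupp \<mu>) \<and> (\<forall>x. 0 \<le> \<mu> x) \<and> sum \<mu> (fsupp \<mu>) = 1"

definition pm :: "('c \<Rightarrow> real) \<Rightarrow> ('d \<Rightarrow> real) \<Rightarrow> ('c \<times> 'd \<Rightarrow> real)" where
  "pm \<mu> \<nu> = (\<lambda>z. \<mu> (fst z) * \<nu> (snd z))"

lemma fsupp_pm: "fsupp (pm \<mu> \<nu>) = fsupp \<mu> \<times> fsupp \<nu>"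
  by (auto simp: fsupp_def pm_def)

lemma pm_coupling:
  assumes "pmeas \<alpha>" "pmeas \<beta>" shows "pm \<alpha> \<beta> \<in> couplings \<alpha> \<beta>"
proof -
  have f: "finite (fsupp \<alpha>)" "finite (fsupp \<beta>)" using assms by (auto simp: pmeas_def)
  have "(\<Sum>y\<in>fsupp \<beta>. \<alpha> x * \<beta> y) = \<alpha> x" for x
    using assms by (simp add: pmeas_def flip: sum_distrib_left)
  moreover have "(\<Sum>x\<in>fsupp \<alpha>. \<alpha> x * \<beta> y) = \<beta> y" for y
    using assms by (simp add: pmeas_def flip: sum_distrib_right)
  ultimately show ?thesis
    using assms f by (subst couplings_box[OF f fsupp_pm[THEN equalityD1]]) (auto simp: pm_def pmeas_def)
qed

lemma couplings_ne: "pmeas \<alpha> \<Longrightarrow> pmeas \<beta> \<Longrightarrow> couplings \<alpha> \<beta> \<noteq> {}"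
  using pm_coupling by blast

definition dg :: "('c \<Rightarrow> real) \<Rightarrow> ('c \<times> 'c \<Rightarrow> real)" where
  "dg \<alpha> = (\<lambda>z. if fst z = snd z then \<alpha> (fst z) else 0)"

lemma dg_coupling:
  assumes "pmeas \<alpha>" shows "dg \<alpha> \<in> couplings \<alpha> \<alpha>"
proof -
  have f: "finite (fsupp \<alpha>)" using assms by (auto simp: pmeas_def)
  have s: "fsupp (dg \<alpha>) \<subseteq> fsupp \<alpha> \<times> fsupp \<alpha>" by (auto simp: fsupp_def dg_def split: if_splits)
  have a: "(\<Sum>y\<in>fsupp \<alpha>. (if x = y then \<alpha> x else 0)) = \<alpha> x" for x
    using f by (cases "\<alpha> x = 0") (simp_all add: fsupp_def sum.delta')
  have b: "(\<Sum>x\<in>fsupp \<alpha>. (if x = y then \<alpha> x else 0)) = \<alpha> y" for y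
    using f by (cases "\<alpha> y = 0") (simp_all add: fsupp_def sum.delta)
  show ?thesis
    using assms f s a b by (subst couplings_box[OF f f s]) (auto simp: dg_def pmeas_def fsupp_def)
qed

lemma dg_cost: "(\<And>x. x \<in> fsupp \<alpha> \<Longrightarrow> c x x = 0) \<Longrightarrow> 0 < p \<Longrightarrow> wcost p c (dg \<alpha>) = 0"
  unfolding wcost_def by (rule sum.neutral) (auto simp: dg_def fsupp_def split: if_splits)

lemma IW_self: "pmeas \<alpha> \<Longrightarrow> (\<And>x. x \<in> fsupp \<alpha> \<Longrightarrow> c x x = 0) \<Longrightarrow> 0 < p \<Longrightarrow> IW p c \<alpha> \<alpha> = 0"
  using IW_le[OF dg_coupling, of \<alpha> p c] dg_cost[of \<alpha> c p] IW_nonneg[OF couplings_ne, of \<alpha> \<alpha> p c]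
  by force

lemma couplings_fin:
  assumes "\<gamma> \<in> couplings \<mu> \<nu>" shows "finite (fsupp \<mu>)" "finite (fsupp \<nu>)"
proof -
  have fin: "finite (fsupp \<gamma>)" using assms by (auto simp: couplings_def)
  have "fsupp \<mu> \<subseteq> fst ` fsupp \<gamma>"
  proof
    fix x assume "x \<in> fsupp \<mu>"
    then have "(\<Sum>z\<in>fsupp \<gamma> \<inter> {z. fst z = x}. \<gamma> z) \<noteq> 0" using assms by (auto simp: couplings_def fsupp_def)
    then have "fsupp \<gamma> \<inter> {z. fst z = x} \<noteq> {}" by (metis sum.empty)
    then obtain z where "z \<in> fsupp \<gamma>" "fst z = x" by blast
    then show "x \<in> fst ` fsupp \<gamma>" by auto
  qed
  then show "finite (fsupp \<mu>)" using fin finite_subset by blast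
  have "fsupp \<nu> \<subseteq> snd ` fsupp \<gamma>"
  proof
    fix x assume "x \<in> fsupp \<nu>"
    then have "(\<Sum>z\<in>fsupp \<gamma> \<inter> {z. snd z = x}. \<gamma> z) \<noteq> 0" using assms by (auto simp: couplings_def fsupp_def)
    then have "fsupp \<gamma> \<inter> {z. snd z = x} \<noteq> {}" by (metis sum.empty)
    then obtain z where "z \<in> fsupp \<gamma>" "snd z = x" by blast
    then show "x \<in> snd ` fsupp \<gamma>" by auto
  qed
  then show "finite (fsupp \<nu>)" using fin finite_subset by blast
qed

lemma couplings_marg_nonneg:
  assumes "\<gamma> \<in> couplings \<mu> \<nu>" shows "0 \<le> \<mu> x" "0 \<le> \<nu> x"
proof -
  have "\<mu> x = (\<Sum>z\<in>fsupp \<gamma> \<inter> {z. fst z = x}. \<gamma> z)" "\<nu> x = (\<Sum>z\<in>fsupp \<gamma> \<inter> {z. snd z = x}. \<gamma> z)"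
    using assms unfolding couplings_def by auto
  moreover have "\<And>z. 0 \<le> \<gamma> z" using assms by (rule couplings_nonneg)
  ultimately show "0 \<le> \<mu> x" "0 \<le> \<nu> x" by (simp_all add: sum_nonneg)
qed

lemma couplings_box_use:
  assumes "\<gamma> \<in> couplings \<mu> \<nu>" "finite A" "finite B" "fsupp \<gamma> \<subseteq> A \<times> B"
  shows "(\<Sum>y\<in>B. \<gamma> (x,y)) = \<mu> x" "(\<Sum>x\<in>A. \<gamma> (x,y)) = \<nu> y"
  using couplings_box[OF assms(2-4)] assms(1) couplings_nonneg[OF assms(1)] by auto

lemma lin3:
  assumes g1: "\<gamma>1 \<in> couplings \<alpha>1 \<beta>1" and g2: "\<gamma>2 \<in> couplings \<alpha>2 \<beta>2" and g3: "\<gamma>3 \<in> couplings \<alpha>3 \<beta>3"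
    and a: "0 \<le> a" "0 \<le> b" "0 \<le> c"
  shows "(\<lambda>z. a * \<gamma>1 z + b * \<gamma>2 z + c * \<gamma>3 z) \<in> couplings (\<lambda>x. a * \<alpha>1 x + b * \<alpha>2 x + c * \<alpha>3 x) (\<lambda>x. a * \<beta>1 x + b * \<beta>2 x + c * \<beta>3 x)"
    "wcost p d (\<lambda>z. a * \<gamma>1 z + b * \<gamma>2 z + c * \<gamma>3 z) = a * wcost p d \<gamma>1 + b * wcost p d \<gamma>2 + c * wcost p d \<gamma>3"
proof -
  define S where "S = fsupp \<gamma>1 \<union> fsupp \<gamma>2 \<union> fsupp \<gamma>3"
  have fS: "finite S" using g1 g2 g3 by (auto simp: S_def couplings_def)
  have sub: "fsupp \<gamma>1 \<subseteq> S" "fsupp \<gamma>2 \<subseteq> S" "fsupp \<gamma>3 \<subseteq> S" by (auto simp: S_def)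
  have subl: "fsupp (\<lambda>z. a * \<gamma>1 z + b * \<gamma>2 z + c * \<gamma>3 z) \<subseteq> S" by (auto simp: S_def fsupp_def)
  have nn: "0 \<le> a * \<gamma>1 z + b * \<gamma>2 z + c * \<gamma>3 z" for z
    using a couplings_nonneg[OF g1] couplings_nonneg[OF g2] couplings_nonneg[OF g3] by simp
  note c1 = couplings_S[OF fS sub(1) couplings_nonneg[OF g1], THEN iffD1, OF g1]
  note c2 = couplings_S[OF fS sub(2) couplings_nonneg[OF g2], THEN iffD1, OF g2]
  note c3 = couplings_S[OF fS sub(3) couplings_nonneg[OF g3], THEN iffD1, OF g3]
  show "(\<lambda>z. a * \<gamma>1 z + b * \<gamma>2 z + c * \<gamma>3 z) \<in> couplings (\<lambda>x. a * \<alpha>1 x + b * \<alpha>2 x + c * \<alpha>3 x) (\<lambda>x. a * \<beta>1 x + b * \<beta>2 x + c * \<beta>3 x)"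
    using c1 c2 c3 by (subst couplings_S[OF fS subl nn]) (simp add: sum.distrib sum_distrib_left[symmetric])
  show "wcost p d (\<lambda>z. a * \<gamma>1 z + b * \<gamma>2 z + c * \<gamma>3 z) = a * wcost p d \<gamma>1 + b * wcost p d \<gamma>2 + c * wcost p d \<gamma>3"
    unfolding wcost_S[OF fS subl] wcost_S[OF fS sub(1)] wcost_S[OF fS sub(2)] wcost_S[OF fS sub(3)]
    by (simp add: sum.distrib sum_distrib_left algebra_simps)
qed

lemma powr_sum_le:
  fixes a b p :: real assumes "0 \<le> a" "0 \<le> b" "0 \<le> p"
  shows "(a + b) powr p \<le> 2 powr p * (a powr p + b powr p)"
proof -
  have "(a + b) powr p \<le> (2 * max a b) powr p" by (rule powr_mono2) (use assms in auto)
  also have "\<dots> = 2 powr p * max a b powr p" using assms by (simp add: powr_mult)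
  also have "max a b powr p \<le> a powr p + b powr p" by (cases "a \<le> b") auto
  then have "2 powr p * max a b powr p \<le> 2 powr p * (a powr p + b powr p)" by simp
  finally show ?thesis .
qed



definition gl :: "('c \<Rightarrow> real) \<Rightarrow> ('c \<times> 'c \<Rightarrow> real) \<Rightarrow> ('c \<times> 'c \<Rightarrow> real) \<Rightarrow> ('c \<times> 'c \<Rightarrow> real)" where
  "gl \<beta> \<gamma>1 \<gamma>2 = (\<lambda>z. \<Sum>y\<in>fsupp \<beta>. \<gamma>1 (fst z, y) * \<gamma>2 (y, snd z) / \<beta> y)"

lemma glue:
  assumes g1: "\<gamma>1 \<in> couplings \<alpha> \<beta>" and g2: "\<gamma>2 \<in> couplings \<beta> \<zeta>" and p: "0 \<le> p"
    and cnn: "\<And>x y. 0 \<le> c x y"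
    and tri: "\<And>x y z. x \<in> fsupp \<alpha> \<Longrightarrow> y \<in> fsupp \<beta> \<Longrightarrow> z \<in> fsupp \<zeta> \<Longrightarrow> c x z \<le> c x y + c y z"
  shows "gl \<beta> \<gamma>1 \<gamma>2 \<in> couplings \<alpha> \<zeta>" "wcost p c (gl \<beta> \<gamma>1 \<gamma>2) \<le> 2 powr p * (wcost p c \<gamma>1 + wcost p c \<gamma>2)"
proof -
  define A where "A = fsupp \<alpha>"
  define B where "B = fsupp \<beta>"
  define C where "C = fsupp \<zeta>"
  have fA: "finite A" and fB: "finite B" and fC: "finite C"
    using couplings_fin[OF g1] couplings_fin[OF g2] by (auto simp: A_def B_def C_def)
  have s1: "fsupp \<gamma>1 \<subseteq> A \<times> B" and s2: "fsupp \<gamma>2 \<subseteq> B \<times> C"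
    using couplings_supp[OF g1] couplings_supp[OF g2] by (auto simp: A_def B_def C_def)
  have bpos: "y \<in> B \<Longrightarrow> 0 < \<beta> y" for y
    using couplings_marg_nonneg(2)[OF g1, of y] by (auto simp: B_def fsupp_def)
  have n1: "0 \<le> \<gamma>1 z" and n2: "0 \<le> \<gamma>2 z" for z using g1 g2 by (auto intro: couplings_nonneg)
  have mg1: "(\<Sum>y\<in>B. \<gamma>1 (x,y)) = \<alpha> x" "(\<Sum>x\<in>A. \<gamma>1 (x,y)) = \<beta> y" for x y
    using couplings_box_use[OF g1 fA fB s1] by auto
  have mg2: "(\<Sum>z\<in>C. \<gamma>2 (y,z)) = \<beta> y" "(\<Sum>y\<in>B. \<gamma>2 (y,z)) = \<zeta> z" for y z
    using couplings_box_use[OF g2 fB fC s2] by auto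
  define T where "T x y z = \<gamma>1 (x,y) * \<gamma>2 (y,z) / \<beta> y" for x y z
  have Tnn: "y \<in> B \<Longrightarrow> 0 \<le> T x y z" for x y z
    using bpos[of y] n1 n2 by (auto simp: T_def)
  have kap: "gl \<beta> \<gamma>1 \<gamma>2 (x,z) = (\<Sum>y\<in>B. T x y z)" for x z by (simp add: gl_def T_def B_def)
  have knn: "0 \<le> gl \<beta> \<gamma>1 \<gamma>2 w" for w
    using kap[of "fst w" "snd w"] Tnn by (auto intro: sum_nonneg)
  have sk: "fsupp (gl \<beta> \<gamma>1 \<gamma>2) \<subseteq> A \<times> C"
  proof
    fix w assume "w \<in> fsupp (gl \<beta> \<gamma>1 \<gamma>2)"
    then have "(\<Sum>y\<in>B. T (fst w) y (snd w)) \<noteq> 0" using kap[of "fst w" "snd w"] by (simp add: fsupp_def)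
    then obtain y where "y \<in> B" "T (fst w) y (snd w) \<noteq> 0" by (meson sum.neutral)
    then have "\<gamma>1 (fst w, y) \<noteq> 0" "\<gamma>2 (y, snd w) \<noteq> 0" by (auto simp: T_def)
    then have "(fst w, y) \<in> fsupp \<gamma>1" "(y, snd w) \<in> fsupp \<gamma>2" by (auto simp: fsupp_def)
    then show "w \<in> A \<times> C" using s1 s2 by (cases w) auto
  qed
  have TC: "(\<Sum>z\<in>C. f x y * T x y z) = f x y * \<gamma>1 (x,y)" if "y \<in> B" for f x y
  proof -
    have "(\<Sum>z\<in>C. f x y * T x y z) = f x y * \<gamma>1 (x,y) / \<beta> y * (\<Sum>z\<in>C. \<gamma>2 (y,z))"
      unfolding T_def sum_distrib_left by (rule sum.cong) auto
    also have "\<dots> = f x y * \<gamma>1 (x,y)" using mg2(1)[of y] bpos[OF that] by simp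
    finally show ?thesis .
  qed
  have TA: "(\<Sum>x\<in>A. f y z * T x y z) = f y z * \<gamma>2 (y,z)" if "y \<in> B" for f y z
  proof -
    have "(\<Sum>x\<in>A. f y z * T x y z) = f y z * \<gamma>2 (y,z) / \<beta> y * (\<Sum>x\<in>A. \<gamma>1 (x,y))"
      unfolding T_def sum_distrib_left by (rule sum.cong) auto
    also have "\<dots> = f y z * \<gamma>2 (y,z)" using mg1(2)[of y] bpos[OF that] by simp
    finally show ?thesis .
  qed
  have m1: "(\<Sum>z\<in>C. gl \<beta> \<gamma>1 \<gamma>2 (x,z)) = \<alpha> x" for x
  proof -
    have "(\<Sum>z\<in>C. gl \<beta> \<gamma>1 \<gamma>2 (x,z)) = (\<Sum>y\<in>B. \<Sum>z\<in>C. 1 * T x y z)"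
      by (simp add: kap sum.swap[of _ C])
    also have "\<dots> = (\<Sum>y\<in>B. \<gamma>1 (x,y))" using TC[of _ "\<lambda>_ _. 1"] by simp
    finally show ?thesis using mg1 by simp
  qed
  have m2: "(\<Sum>x\<in>A. gl \<beta> \<gamma>1 \<gamma>2 (x,z)) = \<zeta> z" for z
  proof -
    have "(\<Sum>x\<in>A. gl \<beta> \<gamma>1 \<gamma>2 (x,z)) = (\<Sum>y\<in>B. \<Sum>x\<in>A. 1 * T x y z)"
      by (simp add: kap sum.swap[of _ A])
    also have "\<dots> = (\<Sum>y\<in>B. \<gamma>2 (y,z))" using TA[of _ "\<lambda>_ _. 1"] by simp
    finally show ?thesis using mg2 by simp
  qed
  show cp: "gl \<beta> \<gamma>1 \<gamma>2 \<in> couplings \<alpha> \<zeta>"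
    using m1 m2 by (subst couplings_box[OF fA fC sk knn]) auto
  have "wcost p c (gl \<beta> \<gamma>1 \<gamma>2) = (\<Sum>x\<in>A. \<Sum>z\<in>C. \<Sum>y\<in>B. c x z powr p * T x y z)"
    by (simp add: wcost_box[OF fA fC sk] kap sum_distrib_left)
  also have "\<dots> \<le> (\<Sum>x\<in>A. \<Sum>z\<in>C. \<Sum>y\<in>B. 2 powr p * (c x y powr p + c y z powr p) * T x y z)"
  proof (intro sum_mono)
    fix x z y assume xyz: "x \<in> A" "z \<in> C" "y \<in> B"
    have "c x z powr p \<le> (c x y + c y z) powr p"
      by (rule powr_mono2) (use p cnn tri xyz in \<open>auto simp: A_def B_def C_def\<close>)
    also have "\<dots> \<le> 2 powr p * (c x y powr p + c y z powr p)"
      by (rule powr_sum_le) (use p cnn in auto)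
    finally show "c x z powr p * T x y z \<le> 2 powr p * (c x y powr p + c y z powr p) * T x y z"
      using Tnn[OF xyz(3)] by (rule mult_right_mono)
  qed
  also have "\<dots> = 2 powr p * ((\<Sum>x\<in>A. \<Sum>y\<in>B. \<Sum>z\<in>C. c x y powr p * T x y z)
                  + (\<Sum>y\<in>B. \<Sum>z\<in>C. \<Sum>x\<in>A. c y z powr p * T x y z))"
  proof -
    have "(\<Sum>x\<in>A. \<Sum>z\<in>C. \<Sum>y\<in>B. 2 powr p * (c x y powr p + c y z powr p) * T x y z)
        = 2 powr p * ((\<Sum>x\<in>A. \<Sum>z\<in>C. \<Sum>y\<in>B. c x y powr p * T x y z)
                  + (\<Sum>x\<in>A. \<Sum>z\<in>C. \<Sum>y\<in>B. c y z powr p * T x y z))"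
      by (simp add: sum_distrib_left sum.distrib algebra_simps)
    also have "(\<Sum>x\<in>A. \<Sum>z\<in>C. \<Sum>y\<in>B. c x y powr p * T x y z) = (\<Sum>x\<in>A. \<Sum>y\<in>B. \<Sum>z\<in>C. c x y powr p * T x y z)"
      by (rule sum.cong[OF refl]) (rule sum.swap)
    also have "(\<Sum>x\<in>A. \<Sum>z\<in>C. \<Sum>y\<in>B. c y z powr p * T x y z) = (\<Sum>y\<in>B. \<Sum>z\<in>C. \<Sum>x\<in>A. c y z powr p * T x y z)"
    proof -
      have "(\<Sum>x\<in>A. \<Sum>z\<in>C. \<Sum>y\<in>B. c y z powr p * T x y z) = (\<Sum>x\<in>A. \<Sum>y\<in>B. \<Sum>z\<in>C. c y z powr p * T x y z)"
        by (rule sum.cong[OF refl]) (rule sum.swap)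
      also have "\<dots> = (\<Sum>y\<in>B. \<Sum>x\<in>A. \<Sum>z\<in>C. c y z powr p * T x y z)"
        by (rule sum.swap)
      also have "\<dots> = (\<Sum>y\<in>B. \<Sum>z\<in>C. \<Sum>x\<in>A. c y z powr p * T x y z)"
        by (rule sum.cong[OF refl]) (rule sum.swap)
      finally show ?thesis .
    qed
    finally show ?thesis .
  qed
  also have "\<dots> = 2 powr p * (wcost p c \<gamma>1 + wcost p c \<gamma>2)"
  proof -
    have "(\<Sum>x\<in>A. \<Sum>y\<in>B. \<Sum>z\<in>C. c x y powr p * T x y z) = (\<Sum>x\<in>A. \<Sum>y\<in>B. c x y powr p * \<gamma>1 (x,y))"
      using TC[of _ "\<lambda>x y. c x y powr p"] by simp
    moreover have "(\<Sum>y\<in>B. \<Sum>z\<in>C. \<Sum>x\<in>A. c y z powr p * T x y z) = (\<Sum>y\<in>B. \<Sum>z\<in>C. c y z powr p * \<gamma>2 (y,z))"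
      using TA[of _ "\<lambda>y z. c y z powr p"] by simp
    ultimately show ?thesis by (simp add: wcost_box[OF fA fB s1] wcost_box[OF fB fC s2])
  qed
  finally show "wcost p c (gl \<beta> \<gamma>1 \<gamma>2) \<le> 2 powr p * (wcost p c \<gamma>1 + wcost p c \<gamma>2)" .
qed



lemma sum_prod_split: "(\<Sum>z\<in>A \<times> B. g z) = (\<Sum>x\<in>A. \<Sum>y\<in>B. g (x,y))"
  by (simp add: sum.cartesian_product case_prod_beta)

lemma IW_tri:
  assumes "pmeas \<alpha>" "pmeas \<beta>" "pmeas \<zeta>" "0 \<le> p" "\<And>x y. 0 \<le> c x y"
    and tri: "\<And>x y z. x \<in> fsupp \<alpha> \<Longrightarrow> y \<in> fsupp \<beta> \<Longrightarrow> z \<in> fsupp \<zeta> \<Longrightarrow> c x z \<le> c x y + c y z"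
  shows "IW p c \<alpha> \<zeta> \<le> 2 powr p * (IW p c \<alpha> \<beta> + IW p c \<beta> \<zeta>)"
proof (rule field_le_epsilon)
  fix e :: real assume e: "0 < e"
  have tp: "0 < 2 powr p" by simp
  define \<epsilon> where "\<epsilon> = e / (2 * 2 powr p)"
  have ep: "0 < \<epsilon>" using e tp by (simp add: \<epsilon>_def)
  obtain \<gamma>1 where g1: "\<gamma>1 \<in> couplings \<alpha> \<beta>" "wcost p c \<gamma>1 < IW p c \<alpha> \<beta> + \<epsilon>"
    using IW_approx[OF couplings_ne[OF assms(1,2)], of p c "IW p c \<alpha> \<beta> + \<epsilon>"] ep by auto
  obtain \<gamma>2 where g2: "\<gamma>2 \<in> couplings \<beta> \<zeta>" "wcost p c \<gamma>2 < IW p c \<beta> \<zeta> + \<epsilon>"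
    using IW_approx[OF couplings_ne[OF assms(2,3)], of p c "IW p c \<beta> \<zeta> + \<epsilon>"] ep by auto
  note gg = glue[OF g1(1) g2(1) assms(4,5) tri]
  have "IW p c \<alpha> \<zeta> \<le> wcost p c (gl \<beta> \<gamma>1 \<gamma>2)" by (rule IW_le[OF gg(1)])
  also have "\<dots> \<le> 2 powr p * (wcost p c \<gamma>1 + wcost p c \<gamma>2)" by (rule gg(2))
  also have "\<dots> \<le> 2 powr p * (IW p c \<alpha> \<beta> + IW p c \<beta> \<zeta> + 2 * \<epsilon>)"
    using g1(2) g2(2) tp by (intro mult_left_mono) auto
  also have "\<dots> = 2 powr p * (IW p c \<alpha> \<beta> + IW p c \<beta> \<zeta>) + e"
    using tp by (simp add: \<epsilon>_def algebra_simps)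
  finally show "IW p c \<alpha> \<zeta> \<le> 2 powr p * (IW p c \<alpha> \<beta> + IW p c \<beta> \<zeta>) + e" .
qed

definition tc :: "('a \<times> 'a \<Rightarrow> real) \<Rightarrow> ('b \<times> 'b \<Rightarrow> real) \<Rightarrow> (('a \<times> 'b) \<times> ('a \<times> 'b) \<Rightarrow> real)" where
  "tc \<gamma>1 \<gamma>2 = (\<lambda>w. \<gamma>1 (fst (fst w), fst (snd w)) * \<gamma>2 (snd (fst w), snd (snd w)))"

lemma tensor:
  assumes g1: "\<gamma>1 \<in> couplings \<mu> \<mu>'" and g2: "\<gamma>2 \<in> couplings \<nu> \<nu>'" and pm: "pmeas \<mu>" "pmeas \<nu>"
    and p: "0 \<le> p" and dnn: "\<And>x y. 0 \<le> d x y" and enn: "\<And>x y. 0 \<le> e x y"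
  shows "tc \<gamma>1 \<gamma>2 \<in> couplings (pm \<mu> \<nu>) (pm \<mu>' \<nu>')"
    "wcost p (max_dist d e) (tc \<gamma>1 \<gamma>2) \<le> wcost p d \<gamma>1 + wcost p e \<gamma>2"
proof -
  define A where "A = fsupp \<mu>"
  define A' where "A' = fsupp \<mu>'"
  define B where "B = fsupp \<nu>"
  define B' where "B' = fsupp \<nu>'"
  have fin: "finite A" "finite A'" "finite B" "finite B'"
    using couplings_fin[OF g1] couplings_fin[OF g2] by (auto simp: A_def A'_def B_def B'_def)
  have s1: "fsupp \<gamma>1 \<subseteq> A \<times> A'" and s2: "fsupp \<gamma>2 \<subseteq> B \<times> B'"
    using couplings_supp[OF g1] couplings_supp[OF g2] by (auto simp: A_def A'_def B_def B'_def)
  have n1: "0 \<le> \<gamma>1 z" for z using g1 by (auto intro: couplings_nonneg)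
  have n2: "0 \<le> \<gamma>2 z" for z using g2 by (auto intro: couplings_nonneg)
  have mg1: "(\<Sum>y\<in>A'. \<gamma>1 (x,y)) = \<mu> x" "(\<Sum>x\<in>A. \<gamma>1 (x,y)) = \<mu>' y" for x y
    using couplings_box_use[OF g1 fin(1,2) s1] by auto
  have mg2: "(\<Sum>y\<in>B'. \<gamma>2 (x,y)) = \<nu> x" "(\<Sum>x\<in>B. \<gamma>2 (x,y)) = \<nu>' y" for x y
    using couplings_box_use[OF g2 fin(3,4) s2] by auto
  have sm: "(\<Sum>x\<in>A. \<mu> x) = 1" "(\<Sum>x\<in>B. \<nu> x) = 1" using pm by (auto simp: A_def B_def pmeas_def)
  have st: "fsupp (tc \<gamma>1 \<gamma>2) \<subseteq> (A \<times> B) \<times> (A' \<times> B')"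
  proof
    fix w assume "w \<in> fsupp (tc \<gamma>1 \<gamma>2)"
    then have "(fst (fst w), fst (snd w)) \<in> fsupp \<gamma>1" "(snd (fst w), snd (snd w)) \<in> fsupp \<gamma>2"
      by (auto simp: fsupp_def tc_def)
    then show "w \<in> (A \<times> B) \<times> (A' \<times> B')" using s1 s2 by (auto simp: mem_Times_iff)
  qed
  have tnn: "0 \<le> tc \<gamma>1 \<gamma>2 w" for w using n1 n2 by (simp add: tc_def)
  have tcv: "tc \<gamma>1 \<gamma>2 ((x,y),(x',y')) = \<gamma>1 (x,x') * \<gamma>2 (y,y')" for x y x' y' by (simp add: tc_def)
  have m1: "(\<Sum>w\<in>A' \<times> B'. tc \<gamma>1 \<gamma>2 (z,w)) = pm \<mu> \<nu> z" for z
    by (cases z) (simp add: sum_prod_split tcv pm_def sum_product[symmetric] mg1 mg2)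
  have m2: "(\<Sum>z\<in>A \<times> B. tc \<gamma>1 \<gamma>2 (z,w)) = pm \<mu>' \<nu>' w" for w
    by (cases w) (simp add: sum_prod_split tcv pm_def sum_product[symmetric] mg1 mg2)
  show "tc \<gamma>1 \<gamma>2 \<in> couplings (pm \<mu> \<nu>) (pm \<mu>' \<nu>')"
    using m1 m2 by (subst couplings_box[OF _ _ st tnn]) (use fin in auto)
  have "wcost p (max_dist d e) (tc \<gamma>1 \<gamma>2) =
     (\<Sum>x\<in>A. \<Sum>y\<in>B. \<Sum>x'\<in>A'. \<Sum>y'\<in>B'. max (d x x') (e y y') powr p * (\<gamma>1 (x,x') * \<gamma>2 (y,y')))"
    using fin by (simp add: wcost_box[OF _ _ st] sum_prod_split tcv max_dist_def)
  also have "\<dots> \<le> (\<Sum>x\<in>A. \<Sum>y\<in>B. \<Sum>x'\<in>A'. \<Sum>y'\<in>B'. (d x x' powr p * \<gamma>1 (x,x')) * \<gamma>2 (y,y') + (e y y' powr p * \<gamma>2 (y,y')) * \<gamma>1 (x,x'))"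
  proof (intro sum_mono)
    fix x y x' y'
    have "max (d x x') (e y y') powr p \<le> d x x' powr p + e y y' powr p" by (cases "d x x' \<le> e y y'") auto
    then have "max (d x x') (e y y') powr p * (\<gamma>1 (x,x') * \<gamma>2 (y,y')) \<le> (d x x' powr p + e y y' powr p) * (\<gamma>1 (x,x') * \<gamma>2 (y,y'))"
      by (rule mult_right_mono) (use n1 n2 in simp)
    then show "max (d x x') (e y y') powr p * (\<gamma>1 (x,x') * \<gamma>2 (y,y')) \<le> (d x x' powr p * \<gamma>1 (x,x')) * \<gamma>2 (y,y') + (e y y' powr p * \<gamma>2 (y,y')) * \<gamma>1 (x,x')"
      by (simp add: algebra_simps)
  qed
  also have "\<dots> = (\<Sum>x\<in>A. \<Sum>y\<in>B. \<Sum>x'\<in>A'. (d x x' powr p * \<gamma>1 (x,x')) * \<nu> y)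
       + (\<Sum>x\<in>A. \<Sum>y\<in>B. \<Sum>y'\<in>B'. (e y y' powr p * \<gamma>2 (y,y')) * \<mu> x)"
  proof -
    have "(\<Sum>x\<in>A. \<Sum>y\<in>B. \<Sum>x'\<in>A'. \<Sum>y'\<in>B'. (d x x' powr p * \<gamma>1 (x,x')) * \<gamma>2 (y,y') + (e y y' powr p * \<gamma>2 (y,y')) * \<gamma>1 (x,x'))
      = (\<Sum>x\<in>A. \<Sum>y\<in>B. \<Sum>x'\<in>A'. \<Sum>y'\<in>B'. (d x x' powr p * \<gamma>1 (x,x')) * \<gamma>2 (y,y'))
       + (\<Sum>x\<in>A. \<Sum>y\<in>B. \<Sum>x'\<in>A'. \<Sum>y'\<in>B'. (e y y' powr p * \<gamma>2 (y,y')) * \<gamma>1 (x,x'))"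
      by (simp add: sum.distrib)
    also have "(\<Sum>x\<in>A. \<Sum>y\<in>B. \<Sum>x'\<in>A'. \<Sum>y'\<in>B'. (d x x' powr p * \<gamma>1 (x,x')) * \<gamma>2 (y,y'))
        = (\<Sum>x\<in>A. \<Sum>y\<in>B. \<Sum>x'\<in>A'. (d x x' powr p * \<gamma>1 (x,x')) * \<nu> y)"
      by (simp add: sum_distrib_left[symmetric] mg2)
    also have "(\<Sum>x\<in>A. \<Sum>y\<in>B. \<Sum>x'\<in>A'. \<Sum>y'\<in>B'. (e y y' powr p * \<gamma>2 (y,y')) * \<gamma>1 (x,x'))
        = (\<Sum>x\<in>A. \<Sum>y\<in>B. \<Sum>y'\<in>B'. \<Sum>x'\<in>A'. (e y y' powr p * \<gamma>2 (y,y')) * \<gamma>1 (x,x'))"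
      by (intro sum.cong refl sum.swap)
    also have "\<dots> = (\<Sum>x\<in>A. \<Sum>y\<in>B. \<Sum>y'\<in>B'. (e y y' powr p * \<gamma>2 (y,y')) * \<mu> x)"
      by (simp add: sum_distrib_left[symmetric] mg1)
    finally show ?thesis .
  qed
  also have "\<dots> = wcost p d \<gamma>1 + wcost p e \<gamma>2"
  proof -
    have "(\<Sum>x\<in>A. \<Sum>y\<in>B. \<Sum>x'\<in>A'. (d x x' powr p * \<gamma>1 (x,x')) * \<nu> y)
        = (\<Sum>x\<in>A. \<Sum>x'\<in>A'. \<Sum>y\<in>B. (d x x' powr p * \<gamma>1 (x,x')) * \<nu> y)"
      by (intro sum.cong refl sum.swap)
    also have "\<dots> = (\<Sum>x\<in>A. \<Sum>x'\<in>A'. d x x' powr p * \<gamma>1 (x,x'))"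
      by (simp add: sum_distrib_left[symmetric] sm)
    also have "\<dots> = wcost p d \<gamma>1" using fin by (simp add: wcost_box[OF _ _ s1])
    finally have 1: "(\<Sum>x\<in>A. \<Sum>y\<in>B. \<Sum>x'\<in>A'. (d x x' powr p * \<gamma>1 (x,x')) * \<nu> y) = wcost p d \<gamma>1" .
    have "(\<Sum>x\<in>A. \<Sum>y\<in>B. \<Sum>y'\<in>B'. (e y y' powr p * \<gamma>2 (y,y')) * \<mu> x)
        = (\<Sum>x\<in>A. \<mu> x * (\<Sum>y\<in>B. \<Sum>y'\<in>B'. e y y' powr p * \<gamma>2 (y,y')))"
      by (simp add: sum_distrib_left mult.commute)
    also have "\<dots> = (\<Sum>y\<in>B. \<Sum>y'\<in>B'. e y y' powr p * \<gamma>2 (y,y'))"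
      by (simp add: sum_distrib_right[symmetric] sm)
    also have "\<dots> = wcost p e \<gamma>2" using fin by (simp add: wcost_box[OF _ _ s2])
    finally show ?thesis using 1 by simp
  qed
  finally show "wcost p (max_dist d e) (tc \<gamma>1 \<gamma>2) \<le> wcost p d \<gamma>1 + wcost p e \<gamma>2" .
qed



definition m1 :: "('a \<times> 'b \<Rightarrow> real) \<Rightarrow> 'a \<Rightarrow> real" where
  "m1 \<pi> = (\<lambda>x. \<Sum>y\<in>snd ` fsupp \<pi>. \<pi> (x,y))"
definition m2 :: "('a \<times> 'b \<Rightarrow> real) \<Rightarrow> 'b \<Rightarrow> real" where
  "m2 \<pi> = (\<lambda>y. \<Sum>x\<in>fst ` fsupp \<pi>. \<pi> (x,y))"

definition pf1 :: "(('a \<times> 'b) \<times> ('a \<times> 'b) \<Rightarrow> real) \<Rightarrow> 'b set \<Rightarrow> 'b set \<Rightarrow> ('a \<times> 'a \<Rightarrow> real)" where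
  "pf1 \<Gamma> B B' = (\<lambda>z. \<Sum>y\<in>B. \<Sum>y'\<in>B'. \<Gamma> ((fst z, y), (snd z, y')))"
definition pf2 :: "(('a \<times> 'b) \<times> ('a \<times> 'b) \<Rightarrow> real) \<Rightarrow> 'a set \<Rightarrow> 'a set \<Rightarrow> ('b \<times> 'b \<Rightarrow> real)" where
  "pf2 \<Gamma> A A' = (\<lambda>z. \<Sum>x\<in>A. \<Sum>x'\<in>A'. \<Gamma> ((x, fst z), (x', snd z)))"

lemma push_common:
  assumes g: "\<Gamma> \<in> couplings \<pi> \<pi>'"
  defines "A \<equiv> fst ` fsupp \<pi>" and "B \<equiv> snd ` fsupp \<pi>" and "A' \<equiv> fst ` fsupp \<pi>'" and "B' \<equiv> snd ` fsupp \<pi>'"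
  shows "finite A" "finite B" "finite A'" "finite B'" "fsupp \<Gamma> \<subseteq> (A \<times> B) \<times> (A' \<times> B')"
    "fsupp \<pi> \<subseteq> A \<times> B" "fsupp \<pi>' \<subseteq> A' \<times> B'"
    "\<And>z. (\<Sum>w\<in>A' \<times> B'. \<Gamma> (z,w)) = \<pi> z" "\<And>w. (\<Sum>z\<in>A \<times> B. \<Gamma> (z,w)) = \<pi>' w"
proof -
  show f: "finite A" "finite B" "finite A'" "finite B'"
    using couplings_fin[OF g] by (auto simp: A_def B_def A'_def B'_def)
  show s0: "fsupp \<pi> \<subseteq> A \<times> B" "fsupp \<pi>' \<subseteq> A' \<times> B'"
    unfolding A_def B_def A'_def B'_def by (auto intro: rev_image_eqI)
  show s: "fsupp \<Gamma> \<subseteq> (A \<times> B) \<times> (A' \<times> B')" using couplings_supp[OF g] s0 by blast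
  show "\<And>z. (\<Sum>w\<in>A' \<times> B'. \<Gamma> (z,w)) = \<pi> z" "\<And>w. (\<Sum>z\<in>A \<times> B. \<Gamma> (z,w)) = \<pi>' w"
    using couplings_box_use[OF g _ _ s] f by auto
qed

lemma push1:
  assumes g: "\<Gamma> \<in> couplings \<pi> \<pi>'" and p: "0 \<le> p" and dnn: "\<And>x y. 0 \<le> d x y" and enn: "\<And>x y. 0 \<le> e x y"
  shows "pf1 \<Gamma> (snd ` fsupp \<pi>) (snd ` fsupp \<pi>') \<in> couplings (m1 \<pi>) (m1 \<pi>')"
    "wcost p d (pf1 \<Gamma> (snd ` fsupp \<pi>) (snd ` fsupp \<pi>')) \<le> wcost p (max_dist d e) \<Gamma>"
proof -
  define A where "A = fst ` fsupp \<pi>"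
  define B where "B = snd ` fsupp \<pi>"
  define A' where "A' = fst ` fsupp \<pi>'"
  define B' where "B' = snd ` fsupp \<pi>'"
  note pc = push_common[OF g, folded A_def B_def A'_def B'_def]
  have n: "0 \<le> \<Gamma> z" for z using g by (rule couplings_nonneg)
  define \<gamma> where "\<gamma> = pf1 \<Gamma> B B'"
  have gv: "\<gamma> (x,x') = (\<Sum>y\<in>B. \<Sum>y'\<in>B'. \<Gamma> ((x, y), (x', y')))" for x x' by (simp add: \<gamma>_def pf1_def)
  have gnn: "0 \<le> \<gamma> z" for z by (simp add: \<gamma>_def pf1_def n sum_nonneg)
  have sg: "fsupp \<gamma> \<subseteq> A \<times> A'"
  proof
    fix z assume "z \<in> fsupp \<gamma>"
    then have "(\<Sum>y\<in>B. \<Sum>y'\<in>B'. \<Gamma> ((fst z, y), (snd z, y'))) \<noteq> 0" using gv[of "fst z" "snd z"] by (simp add: fsupp_def)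
    then obtain y y' where "\<Gamma> ((fst z, y), (snd z, y')) \<noteq> 0" by (meson sum.neutral)
    then have "((fst z, y), (snd z, y')) \<in> fsupp \<Gamma>" by (simp add: fsupp_def)
    then show "z \<in> A \<times> A'" using pc(5) by (cases z) auto
  qed
  have mA: "(\<Sum>x'\<in>A'. \<gamma> (x,x')) = m1 \<pi> x" for x
  proof -
    have "(\<Sum>x'\<in>A'. \<gamma> (x,x')) = (\<Sum>x'\<in>A'. \<Sum>y\<in>B. \<Sum>y'\<in>B'. \<Gamma> ((x, y), (x', y')))"
      by (simp add: gv)
    also have "\<dots> = (\<Sum>y\<in>B. \<Sum>x'\<in>A'. \<Sum>y'\<in>B'. \<Gamma> ((x, y), (x', y')))"
      by (rule sum.swap)
    also have "\<dots> = (\<Sum>y\<in>B. \<pi> (x,y))" using pc(8) by (simp add: sum_prod_split)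
    finally show ?thesis by (simp add: m1_def B_def)
  qed
  have mA': "(\<Sum>x\<in>A. \<gamma> (x,x')) = m1 \<pi>' x'" for x'
  proof -
    have "(\<Sum>x\<in>A. \<gamma> (x,x')) = (\<Sum>x\<in>A. \<Sum>y\<in>B. \<Sum>y'\<in>B'. \<Gamma> ((x, y), (x', y')))"
      by (simp add: gv)
    also have "\<dots> = (\<Sum>x\<in>A. \<Sum>y'\<in>B'. \<Sum>y\<in>B. \<Gamma> ((x, y), (x', y')))"
      by (intro sum.cong refl sum.swap)
    also have "\<dots> = (\<Sum>y'\<in>B'. \<Sum>x\<in>A. \<Sum>y\<in>B. \<Gamma> ((x, y), (x', y')))"
      by (rule sum.swap)
    also have "\<dots> = (\<Sum>y'\<in>B'. \<pi>' (x',y'))" using pc(9) by (simp add: sum_prod_split)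
    finally show ?thesis by (simp add: m1_def B'_def)
  qed
  have "\<gamma> \<in> couplings (m1 \<pi>) (m1 \<pi>')" using mA mA' by (subst couplings_box[OF pc(1) pc(3) sg gnn]) auto
  then show "pf1 \<Gamma> (snd ` fsupp \<pi>) (snd ` fsupp \<pi>') \<in> couplings (m1 \<pi>) (m1 \<pi>')" by (simp add: \<gamma>_def B_def B'_def)
  have "wcost p d \<gamma> = (\<Sum>x\<in>A. \<Sum>x'\<in>A'. \<Sum>y\<in>B. \<Sum>y'\<in>B'. d x x' powr p * \<Gamma> ((x, y), (x', y')))"
    using pc by (simp add: wcost_box[OF _ _ sg] gv sum_distrib_left)
  also have "\<dots> \<le> (\<Sum>x\<in>A. \<Sum>x'\<in>A'. \<Sum>y\<in>B. \<Sum>y'\<in>B'. max (d x x') (e y y') powr p * \<Gamma> ((x, y), (x', y')))"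
    by (intro sum_mono mult_right_mono powr_mono2) (use p dnn n in auto)
  also have "\<dots> = (\<Sum>x\<in>A. \<Sum>y\<in>B. \<Sum>x'\<in>A'. \<Sum>y'\<in>B'. max (d x x') (e y y') powr p * \<Gamma> ((x, y), (x', y')))"
    by (intro sum.cong refl sum.swap)
  also have "\<dots> = wcost p (max_dist d e) \<Gamma>"
    using pc by (simp add: wcost_box[OF _ _ pc(5)] sum_prod_split max_dist_def)
  finally show "wcost p d (pf1 \<Gamma> (snd ` fsupp \<pi>) (snd ` fsupp \<pi>')) \<le> wcost p (max_dist d e) \<Gamma>"
    by (simp add: \<gamma>_def B_def B'_def)
qed

lemma push2:
  assumes g: "\<Gamma> \<in> couplings \<pi> \<pi>'" and p: "0 \<le> p" and dnn: "\<And>x y. 0 \<le> d x y" and enn: "\<And>x y. 0 \<le> e x y"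
  shows "pf2 \<Gamma> (fst ` fsupp \<pi>) (fst ` fsupp \<pi>') \<in> couplings (m2 \<pi>) (m2 \<pi>')"
    "wcost p e (pf2 \<Gamma> (fst ` fsupp \<pi>) (fst ` fsupp \<pi>')) \<le> wcost p (max_dist d e) \<Gamma>"
proof -
  define A where "A = fst ` fsupp \<pi>"
  define B where "B = snd ` fsupp \<pi>"
  define A' where "A' = fst ` fsupp \<pi>'"
  define B' where "B' = snd ` fsupp \<pi>'"
  note pc = push_common[OF g, folded A_def B_def A'_def B'_def]
  have n: "0 \<le> \<Gamma> z" for z using g by (rule couplings_nonneg)
  define \<gamma> where "\<gamma> = pf2 \<Gamma> A A'"
  have gv: "\<gamma> (y,y') = (\<Sum>x\<in>A. \<Sum>x'\<in>A'. \<Gamma> ((x, y), (x', y')))" for y y' by (simp add: \<gamma>_def pf2_def)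
  have gnn: "0 \<le> \<gamma> z" for z by (simp add: \<gamma>_def pf2_def n sum_nonneg)
  have sg: "fsupp \<gamma> \<subseteq> B \<times> B'"
  proof
    fix z assume "z \<in> fsupp \<gamma>"
    then have "(\<Sum>x\<in>A. \<Sum>x'\<in>A'. \<Gamma> ((x, fst z), (x', snd z))) \<noteq> 0" using gv[of "fst z" "snd z"] by (simp add: fsupp_def)
    then obtain x x' where "\<Gamma> ((x, fst z), (x', snd z)) \<noteq> 0" by (meson sum.neutral)
    then have "((x, fst z), (x', snd z)) \<in> fsupp \<Gamma>" by (simp add: fsupp_def)
    then show "z \<in> B \<times> B'" using pc(5) by (cases z) auto
  qed
  have mB: "(\<Sum>y'\<in>B'. \<gamma> (y,y')) = m2 \<pi> y" for y
  proof -
    have "(\<Sum>y'\<in>B'. \<gamma> (y,y')) = (\<Sum>y'\<in>B'. \<Sum>x\<in>A. \<Sum>x'\<in>A'. \<Gamma> ((x, y), (x', y')))"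
      by (simp add: gv)
    also have "\<dots> = (\<Sum>x\<in>A. \<Sum>y'\<in>B'. \<Sum>x'\<in>A'. \<Gamma> ((x, y), (x', y')))"
      by (rule sum.swap)
    also have "\<dots> = (\<Sum>x\<in>A. \<Sum>x'\<in>A'. \<Sum>y'\<in>B'. \<Gamma> ((x, y), (x', y')))"
      by (intro sum.cong refl sum.swap)
    also have "\<dots> = (\<Sum>x\<in>A. \<pi> (x,y))" using pc(8) by (simp add: sum_prod_split)
    finally show ?thesis by (simp add: m2_def A_def)
  qed
  have mB': "(\<Sum>y\<in>B. \<gamma> (y,y')) = m2 \<pi>' y'" for y'
  proof -
    have "(\<Sum>y\<in>B. \<gamma> (y,y')) = (\<Sum>y\<in>B. \<Sum>x\<in>A. \<Sum>x'\<in>A'. \<Gamma> ((x, y), (x', y')))"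
      by (simp add: gv)
    also have "\<dots> = (\<Sum>x\<in>A. \<Sum>y\<in>B. \<Sum>x'\<in>A'. \<Gamma> ((x, y), (x', y')))"
      by (rule sum.swap)
    also have "\<dots> = (\<Sum>x\<in>A. \<Sum>x'\<in>A'. \<Sum>y\<in>B. \<Gamma> ((x, y), (x', y')))"
      by (intro sum.cong refl sum.swap)
    also have "\<dots> = (\<Sum>x'\<in>A'. \<Sum>x\<in>A. \<Sum>y\<in>B. \<Gamma> ((x, y), (x', y')))"
      by (rule sum.swap)
    also have "\<dots> = (\<Sum>x'\<in>A'. \<pi>' (x',y'))" using pc(9) by (simp add: sum_prod_split)
    finally show ?thesis by (simp add: m2_def A'_def)
  qed
  have "\<gamma> \<in> couplings (m2 \<pi>) (m2 \<pi>')" using mB mB' by (subst couplings_box[OF pc(2) pc(4) sg gnn]) auto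
  then show "pf2 \<Gamma> (fst ` fsupp \<pi>) (fst ` fsupp \<pi>') \<in> couplings (m2 \<pi>) (m2 \<pi>')" by (simp add: \<gamma>_def A_def A'_def)
  have "wcost p e \<gamma> = (\<Sum>y\<in>B. \<Sum>y'\<in>B'. \<Sum>x\<in>A. \<Sum>x'\<in>A'. e y y' powr p * \<Gamma> ((x, y), (x', y')))"
    using pc by (simp add: wcost_box[OF _ _ sg] gv sum_distrib_left)
  also have "\<dots> \<le> (\<Sum>y\<in>B. \<Sum>y'\<in>B'. \<Sum>x\<in>A. \<Sum>x'\<in>A'. max (d x x') (e y y') powr p * \<Gamma> ((x, y), (x', y')))"
    by (intro sum_mono mult_right_mono powr_mono2) (use p enn n in auto)
  also have "\<dots> = (\<Sum>x\<in>A. \<Sum>y\<in>B. \<Sum>x'\<in>A'. \<Sum>y'\<in>B'. max (d x x') (e y y') powr p * \<Gamma> ((x, y), (x', y')))"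
  proof -
    have "(\<Sum>y\<in>B. \<Sum>y'\<in>B'. \<Sum>x\<in>A. \<Sum>x'\<in>A'. max (d x x') (e y y') powr p * \<Gamma> ((x, y), (x', y')))
        = (\<Sum>y\<in>B. \<Sum>x\<in>A. \<Sum>y'\<in>B'. \<Sum>x'\<in>A'. max (d x x') (e y y') powr p * \<Gamma> ((x, y), (x', y')))"
      by (intro sum.cong refl sum.swap)
    also have "\<dots> = (\<Sum>x\<in>A. \<Sum>y\<in>B. \<Sum>y'\<in>B'. \<Sum>x'\<in>A'. max (d x x') (e y y') powr p * \<Gamma> ((x, y), (x', y')))"
      by (rule sum.swap)
    also have "\<dots> = (\<Sum>x\<in>A. \<Sum>y\<in>B. \<Sum>x'\<in>A'. \<Sum>y'\<in>B'. max (d x x') (e y y') powr p * \<Gamma> ((x, y), (x', y')))"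
      by (intro sum.cong refl sum.swap)
    finally show ?thesis .
  qed
  also have "\<dots> = wcost p (max_dist d e) \<Gamma>"
    using pc by (simp add: wcost_box[OF _ _ pc(5)] sum_prod_split max_dist_def)
  finally show "wcost p e (pf2 \<Gamma> (fst ` fsupp \<pi>) (fst ` fsupp \<pi>')) \<le> wcost p (max_dist d e) \<Gamma>"
    by (simp add: \<gamma>_def A_def A'_def)
qed



lemma mtop_openin:
  assumes "Metric_space M d"
  shows "openin (Metric_space.mtopology M d) U \<longleftrightarrow> U \<subseteq> M \<and> (\<forall>x\<in>U. \<exists>r>0. {y\<in>M. d x y < r} \<subseteq> U)"
proof -
  have "Metric_space.mball M d x r = {y\<in>M. d x y < r}" if "x \<in> M" for x r
    using Metric_space.in_mball[OF assms] that by auto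
  then show ?thesis unfolding Metric_space.openin_mtopology[OF assms] by (metis subsetD)
qed

lemma mtop_topspace: "Metric_space M d \<Longrightarrow> topspace (Metric_space.mtopology M d) = M"
  by (rule Metric_space.topspace_mtopology)

lemma cont_mtop:
  assumes ms: "Metric_space M1 d1" "Metric_space M2 d2" and maps: "\<And>x. x \<in> M1 \<Longrightarrow> f x \<in> M2"
    and est: "\<And>x \<epsilon>. x \<in> M1 \<Longrightarrow> 0 < \<epsilon> \<Longrightarrow> \<exists>\<delta>>0. \<forall>y\<in>M1. d1 x y < \<delta> \<longrightarrow> d2 (f x) (f y) < \<epsilon>"
  shows "continuous_map (Metric_space.mtopology M1 d1) (Metric_space.mtopology M2 d2) f"
  unfolding continuous_map_def mtop_topspace[OF ms(1)] mtop_topspace[OF ms(2)]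
proof (intro conjI allI impI)
  show "f \<in> M1 \<rightarrow> M2" using maps by auto
  fix U assume "openin (Metric_space.mtopology M2 d2) U"
  then have U: "U \<subseteq> M2" "\<And>z. z \<in> U \<Longrightarrow> \<exists>r>0. {y\<in>M2. d2 z y < r} \<subseteq> U" unfolding mtop_openin[OF ms(2)] by auto
  show "openin (Metric_space.mtopology M1 d1) {x \<in> M1. f x \<in> U}"
    unfolding mtop_openin[OF ms(1)]
  proof (intro conjI ballI)
    fix x assume x: "x \<in> {x \<in> M1. f x \<in> U}"
    then obtain r where r: "r > 0" "{y\<in>M2. d2 (f x) y < r} \<subseteq> U" using U(2) by blast
    obtain \<delta> where "\<delta> > 0" "\<forall>y\<in>M1. d1 x y < \<delta> \<longrightarrow> d2 (f x) (f y) < r" using est[of x r] x r by auto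
    then show "\<exists>r>0. {y \<in> M1. d1 x y < r} \<subseteq> {x \<in> M1. f x \<in> U}" using r maps by blast
  qed auto
qed

lemma cont_prod01:
  assumes ms: "Metric_space M1 d1" "Metric_space M2 d2" and loc: "\<And>x r. x \<in> M1 \<Longrightarrow> 0 < r \<Longrightarrow> \<exists>s>0. \<forall>y\<in>M1. d1 x y < s \<longrightarrow> (\<exists>\<eta>>0. \<forall>z\<in>M1. d1 y z < \<eta> \<longrightarrow> d1 x z < r)"
    and refl: "\<And>y. y \<in> M1 \<Longrightarrow> d1 y y = 0"
    and maps: "\<And>t x. t \<in> {0..1} \<Longrightarrow> x \<in> M1 \<Longrightarrow> h (t,x) \<in> M2"
    and est: "\<And>t x \<epsilon>. t \<in> {0..1} \<Longrightarrow> x \<in> M1 \<Longrightarrow> 0 < \<epsilon> \<Longrightarrow>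
        \<exists>\<delta>>0. \<forall>t'\<in>{0..1}. \<forall>y\<in>M1. \<bar>t' - t\<bar> < \<delta> \<longrightarrow> d1 x y < \<delta> \<longrightarrow> d2 (h (t,x)) (h (t',y)) < \<epsilon>"
  shows "continuous_map (prod_topology (top_of_set {0..1::real}) (Metric_space.mtopology M1 d1)) (Metric_space.mtopology M2 d2) h"
  unfolding continuous_map_def mtop_topspace[OF ms(1)] mtop_topspace[OF ms(2)] topspace_prod_topology
proof (intro conjI allI impI)
  show "h \<in> topspace (top_of_set {0..1}) \<times> M1 \<rightarrow> M2" using maps by auto
  fix U assume "openin (Metric_space.mtopology M2 d2) U"
  then have U: "U \<subseteq> M2" "\<And>z. z \<in> U \<Longrightarrow> \<exists>r>0. {y\<in>M2. d2 z y < r} \<subseteq> U" unfolding mtop_openin[OF ms(2)] by auto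
  show "openin (prod_topology (top_of_set {0..1}) (Metric_space.mtopology M1 d1))
          {x \<in> topspace (top_of_set {0..1}) \<times> M1. h x \<in> U}"
    unfolding openin_prod_topology_alt
  proof (intro allI impI)
    fix t x assume tx: "(t, x) \<in> {x \<in> topspace (top_of_set {0..1}) \<times> M1. h x \<in> U}"
    then have t: "t \<in> {0..1}" and x: "x \<in> M1" and hU: "h (t,x) \<in> U" by auto
    then obtain r where r: "r > 0" "{y\<in>M2. d2 (h (t,x)) y < r} \<subseteq> U" using U(2) by blast
    obtain \<delta> where \<delta>: "\<delta> > 0" "\<forall>t'\<in>{0..1}. \<forall>y\<in>M1. \<bar>t' - t\<bar> < \<delta> \<longrightarrow> d1 x y < \<delta> \<longrightarrow> d2 (h (t,x)) (h (t',y)) < r"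
      using est[OF t x r(1)] by auto
    define T where "T = {y\<in>M1. \<exists>\<eta>>0. \<forall>z\<in>M1. d1 y z < \<eta> \<longrightarrow> d1 x z < \<delta>}"
    define U' where "U' = {0..1::real} \<inter> ball t \<delta>"
    have oT: "openin (Metric_space.mtopology M1 d1) T"
      unfolding mtop_openin[OF ms(1)]
    proof (intro conjI ballI)
      show "T \<subseteq> M1" by (auto simp: T_def)
      fix y assume "y \<in> T"
      then obtain \<eta> where y: "y \<in> M1" "\<eta> > 0" "\<forall>z\<in>M1. d1 y z < \<eta> \<longrightarrow> d1 x z < \<delta>" by (auto simp: T_def)
      obtain s where s: "s > 0" "\<forall>w\<in>M1. d1 y w < s \<longrightarrow> (\<exists>\<eta>'>0. \<forall>z\<in>M1. d1 w z < \<eta>' \<longrightarrow> d1 y z < \<eta>)"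
        using loc[OF y(1) y(2)] by auto
      show "\<exists>r>0. {z \<in> M1. d1 y z < r} \<subseteq> T"
      proof (intro exI[of _ s] conjI subsetI)
        fix w assume w: "w \<in> {z \<in> M1. d1 y z < s}"
        then obtain \<eta>' where "\<eta>' > 0" "\<forall>z\<in>M1. d1 w z < \<eta>' \<longrightarrow> d1 y z < \<eta>" using s by auto
        then show "w \<in> T" using w y(3) unfolding T_def by auto
      qed (use s in auto)
    qed
    have xT: "x \<in> T" unfolding T_def using x \<delta>(1) by auto
    have oU': "openin (top_of_set {0..1}) U'" unfolding U'_def by auto
    have tU': "t \<in> U'" unfolding U'_def using t \<delta>(1) by auto
    have sub: "U' \<times> T \<subseteq> {x \<in> topspace (top_of_set {0..1}) \<times> M1. h x \<in> U}"
    proof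
      fix w assume "w \<in> U' \<times> T"
      then obtain t' y where w: "w = (t',y)" "t' \<in> {0..1}" "dist t t' < \<delta>" "y \<in> T" by (auto simp: U'_def)
      then have y: "y \<in> M1" "d1 x y < \<delta>"
        using refl[of y] unfolding T_def by auto
      have "\<bar>t' - t\<bar> < \<delta>" using w(3) by (simp add: dist_real_def abs_minus_commute)
      then have "d2 (h (t,x)) (h (t',y)) < r" using \<delta>(2) w(2) y by auto
      then have "h (t',y) \<in> U" using r(2) maps[OF w(2) y(1)] by auto
      then show "w \<in> {x \<in> topspace (top_of_set {0..1}) \<times> M1. h x \<in> U}" using w y by auto
    qed
    show "\<exists>U1 V. openin (top_of_set {0..1}) U1 \<and> openin (Metric_space.mtopology M1 d1) V \<and> t \<in> U1 \<and> x \<in> V \<and>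
             U1 \<times> V \<subseteq> {x \<in> topspace (top_of_set {0..1}) \<times> M1. h x \<in> U}"
      using oU' oT tU' xT sub by blast
  qed
qed



lemma powr_convex0:
  fixes u v t p :: real
  assumes "0 \<le> u" "0 \<le> v" "0 \<le> t" "t \<le> 1" "1 \<le> p"
  shows "((1 - t) * u + t * v) powr p \<le> (1-t) * u powr p + t * v powr p"
proof -
  have sm: "s powr p \<le> s" if "0 \<le> s" "s \<le> 1" for s :: real
  proof (cases "s = 0")
    case False
    then have "s powr p \<le> s powr 1" by (intro powr_mono') (use that assms in auto)
    then show ?thesis using that by simp
  qed (simp)
  show ?thesis
  proof (cases "u = 0")
    case True
    have "(t * v) powr p = t powr p * v powr p" using assms by (simp add: powr_mult)
    also have "\<dots> \<le> t * v powr p" by (rule mult_right_mono) (use sm assms in auto)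
    finally show ?thesis using True by simp
  next
    case u: False
    show ?thesis
    proof (cases "v = 0")
      case True
      have "((1-t)*u) powr p = (1-t) powr p * u powr p" using assms by (simp add: powr_mult)
      also have "\<dots> \<le> (1-t) * u powr p" by (rule mult_right_mono) (use sm assms in auto)
      finally show ?thesis using True by simp
    next
      case False
      then have "u \<in> {0<..}" "v \<in> {0<..}" using u assms by auto
      from convex_onD[OF powr_convex[OF assms(5)] assms(3,4) this] show ?thesis by simp
    qed
  qed
qed

lemma minkowski:
  fixes a b w :: "'i \<Rightarrow> real"
  assumes I: "finite I" and nn: "\<And>i. i \<in> I \<Longrightarrow> 0 \<le> a i" "\<And>i. i \<in> I \<Longrightarrow> 0 \<le> b i" "\<And>i. i \<in> I \<Longrightarrow> 0 \<le> w i"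
    and p: "1 \<le> p"
  shows "(\<Sum>i\<in>I. (a i + b i) powr p * w i) powr (1/p) \<le> (\<Sum>i\<in>I. a i powr p * w i) powr (1/p) + (\<Sum>i\<in>I. b i powr p * w i) powr (1/p)"
proof -
  define SA where "SA = (\<Sum>i\<in>I. a i powr p * w i)"
  define SB where "SB = (\<Sum>i\<in>I. b i powr p * w i)"
  have SA0: "0 \<le> SA" and SB0: "0 \<le> SB" unfolding SA_def SB_def using nn by (auto intro!: sum_nonneg)
  show ?thesis
  proof (cases "SA = 0")
    case True
    have "\<forall>i\<in>I. a i powr p * w i = 0" using True unfolding SA_def
      by (subst sum_nonneg_eq_0_iff[OF I, symmetric]) (use nn in auto)
    then have "(a i + b i) powr p * w i = b i powr p * w i" if "i \<in> I" for i
      using that p by (auto simp: powr_eq_0_iff)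
    then have "(\<Sum>i\<in>I. (a i + b i) powr p * w i) = SB" unfolding SB_def by (rule sum.cong[OF refl])
    then show ?thesis using True by (simp add: SA_def[symmetric] SB_def[symmetric])
  next
    case SAn: False
    show ?thesis
    proof (cases "SB = 0")
      case True
      have "\<forall>i\<in>I. b i powr p * w i = 0" using True unfolding SB_def
        by (subst sum_nonneg_eq_0_iff[OF I, symmetric]) (use nn in auto)
      then have "(a i + b i) powr p * w i = a i powr p * w i" if "i \<in> I" for i
        using that p by (auto simp: powr_eq_0_iff)
      then have "(\<Sum>i\<in>I. (a i + b i) powr p * w i) = SA" unfolding SA_def by (rule sum.cong[OF refl])
      then show ?thesis using True by (simp add: SA_def[symmetric] SB_def[symmetric])
    next
      case SBn: False
      define A where "A = SA powr (1/p)"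
      define B where "B = SB powr (1/p)"
      have Ap: "A > 0" "B > 0" using SA0 SB0 SAn SBn by (auto simp: A_def B_def)
      have Ap': "A powr p = SA" "B powr p = SB" using SA0 SB0 p by (auto simp: A_def B_def powr_powr)
      define t where "t = B / (A + B)"
      have t: "0 \<le> t" "t \<le> 1" "1 - t = A / (A + B)" using Ap by (auto simp: t_def field_simps)
      have pt: "(a i + b i) powr p \<le> (A + B) powr p * ((1 - t) * (a i powr p / SA) + t * (b i powr p / SB))"
        if i: "i \<in> I" for i
      proof -
        have e1: "(1 - t) * (a i / A) = a i / (A + B)" using Ap by (simp add: t(3))
        have e2: "t * (b i / B) = b i / (A + B)" using Ap by (simp add: t_def)
        have "a i + b i = (A + B) * ((1 - t) * (a i / A) + t * (b i / B))"
        proof -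
          have "A + B \<noteq> 0" using Ap by simp
          then have "(A + B) * ((a i + b i) / (A + B)) = a i + b i" by simp
          then show ?thesis unfolding e1 e2 by (simp add: add_divide_distrib)
        qed
        then have "(a i + b i) powr p = (A + B) powr p * ((1 - t) * (a i / A) + t * (b i / B)) powr p"
          using Ap nn[OF i] t by (simp add: powr_mult)
        also have "\<dots> \<le> (A + B) powr p * ((1 - t) * (a i / A) powr p + t * (b i / B) powr p)"
          by (intro mult_left_mono powr_convex0) (use Ap nn[OF i] t p in auto)
        also have "(a i / A) powr p = a i powr p / SA" using Ap Ap' nn[OF i] by (simp add: powr_divide)
        also have "(b i / B) powr p = b i powr p / SB" using Ap Ap' nn[OF i] by (simp add: powr_divide)
        finally show ?thesis .
      qed
      have "(\<Sum>i\<in>I. (a i + b i) powr p * w i) \<le> (\<Sum>i\<in>I. (A + B) powr p * ((1 - t) * (a i powr p / SA) + t * (b i powr p / SB)) * w i)"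
        by (intro sum_mono mult_right_mono pt) (use nn in auto)
      also have "\<dots> = (A + B) powr p * ((1 - t) * (\<Sum>i\<in>I. a i powr p * w i) / SA + t * (\<Sum>i\<in>I. b i powr p * w i) / SB)"
        by (simp add: sum_distrib_left sum_divide_distrib sum.distrib algebra_simps)
      also have "\<dots> = (A + B) powr p" using SAn SBn by (simp add: SA_def[symmetric] SB_def[symmetric])
      finally have "(\<Sum>i\<in>I. (a i + b i) powr p * w i) \<le> (A + B) powr p" .
      then have "(\<Sum>i\<in>I. (a i + b i) powr p * w i) powr (1/p) \<le> ((A + B) powr p) powr (1/p)"
        by (intro powr_mono2) (use p nn in \<open>auto intro!: sum_nonneg\<close>)
      also have "\<dots> = A + B" using Ap p by (simp add: powr_powr)
      finally show ?thesis by (simp add: A_def B_def SA_def SB_def)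
    qed
  qed
qed



lemma glue_tri:
  fixes c :: "'x \<Rightarrow> 'x \<Rightarrow> real"
  assumes g1: "\<gamma>1 \<in> couplings \<alpha> \<beta>" and g2: "\<gamma>2 \<in> couplings \<beta> \<zeta>" and p: "1 \<le> p"
    and cnn: "\<And>x y. 0 \<le> c x y"
    and tri: "\<And>x y z. x \<in> fsupp \<alpha> \<Longrightarrow> y \<in> fsupp \<beta> \<Longrightarrow> z \<in> fsupp \<zeta> \<Longrightarrow> c x z \<le> c x y + c y z"
  shows "wcost p c (gl \<beta> \<gamma>1 \<gamma>2) powr (1/p) \<le> wcost p c \<gamma>1 powr (1/p) + wcost p c \<gamma>2 powr (1/p)"
proof -
  define A where "A = fsupp \<alpha>"
  define B where "B = fsupp \<beta>"
  define C where "C = fsupp \<zeta>"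
  have fA: "finite A" and fB: "finite B" and fC: "finite C"
    using couplings_fin[OF g1] couplings_fin[OF g2] by (auto simp: A_def B_def C_def)
  have s1: "fsupp \<gamma>1 \<subseteq> A \<times> B" and s2: "fsupp \<gamma>2 \<subseteq> B \<times> C"
    using couplings_supp[OF g1] couplings_supp[OF g2] by (auto simp: A_def B_def C_def)
  have bpos: "y \<in> B \<Longrightarrow> 0 < \<beta> y" for y
    using couplings_marg_nonneg(2)[OF g1, of y] by (auto simp: B_def fsupp_def)
  have n1: "0 \<le> \<gamma>1 z" and n2: "0 \<le> \<gamma>2 z" for z using g1 g2 by (auto intro: couplings_nonneg)
  have mg1: "(\<Sum>y\<in>B. \<gamma>1 (x,y)) = \<alpha> x" "(\<Sum>x\<in>A. \<gamma>1 (x,y)) = \<beta> y" for x y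
    using couplings_box_use[OF g1 fA fB s1] by auto
  have mg2: "(\<Sum>z\<in>C. \<gamma>2 (y,z)) = \<beta> y" "(\<Sum>y\<in>B. \<gamma>2 (y,z)) = \<zeta> z" for y z
    using couplings_box_use[OF g2 fB fC s2] by auto
  define T where "T x y z = \<gamma>1 (x,y) * \<gamma>2 (y,z) / \<beta> y" for x y z
  have Tnn: "y \<in> B \<Longrightarrow> 0 \<le> T x y z" for x y z
    using bpos[of y] n1 n2 by (auto simp: T_def)
  have kap: "gl \<beta> \<gamma>1 \<gamma>2 (x,z) = (\<Sum>y\<in>B. T x y z)" for x z by (simp add: gl_def T_def B_def)
  have knn: "0 \<le> gl \<beta> \<gamma>1 \<gamma>2 w" for w
    using kap[of "fst w" "snd w"] Tnn by (auto intro: sum_nonneg)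
  have sk: "fsupp (gl \<beta> \<gamma>1 \<gamma>2) \<subseteq> A \<times> C"
  proof
    fix w assume "w \<in> fsupp (gl \<beta> \<gamma>1 \<gamma>2)"
    then have "(\<Sum>y\<in>B. T (fst w) y (snd w)) \<noteq> 0" using kap[of "fst w" "snd w"] by (simp add: fsupp_def)
    then obtain y where "y \<in> B" "T (fst w) y (snd w) \<noteq> 0" by (meson sum.neutral)
    then have "\<gamma>1 (fst w, y) \<noteq> 0" "\<gamma>2 (y, snd w) \<noteq> 0" by (auto simp: T_def)
    then have "(fst w, y) \<in> fsupp \<gamma>1" "(y, snd w) \<in> fsupp \<gamma>2" by (auto simp: fsupp_def)
    then show "w \<in> A \<times> C" using s1 s2 by (cases w) auto
  qed
  have TC: "(\<Sum>z\<in>C. f x y * T x y z) = f x y * \<gamma>1 (x,y)" if "y \<in> B" for f x y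
  proof -
    have "(\<Sum>z\<in>C. f x y * T x y z) = f x y * \<gamma>1 (x,y) / \<beta> y * (\<Sum>z\<in>C. \<gamma>2 (y,z))"
      unfolding T_def sum_distrib_left by (rule sum.cong) auto
    also have "\<dots> = f x y * \<gamma>1 (x,y)" using mg2(1)[of y] bpos[OF that] by simp
    finally show ?thesis .
  qed
  have TA: "(\<Sum>x\<in>A. f y z * T x y z) = f y z * \<gamma>2 (y,z)" if "y \<in> B" for f y z
  proof -
    have "(\<Sum>x\<in>A. f y z * T x y z) = f y z * \<gamma>2 (y,z) / \<beta> y * (\<Sum>x\<in>A. \<gamma>1 (x,y))"
      unfolding T_def sum_distrib_left by (rule sum.cong) auto
    also have "\<dots> = f y z * \<gamma>2 (y,z)" using mg1(2)[of y] bpos[OF that] by simp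
    finally show ?thesis .
  qed
  have w0: "wcost p c (gl \<beta> \<gamma>1 \<gamma>2) = (\<Sum>x\<in>A. \<Sum>z\<in>C. \<Sum>y\<in>B. c x z powr p * T x y z)"
    by (simp add: wcost_box[OF fA fC sk] kap sum_distrib_left)
  have w1: "wcost p c \<gamma>1 = (\<Sum>x\<in>A. \<Sum>z\<in>C. \<Sum>y\<in>B. c x y powr p * T x y z)"
  proof -
    have "(\<Sum>x\<in>A. \<Sum>z\<in>C. \<Sum>y\<in>B. c x y powr p * T x y z) = (\<Sum>x\<in>A. \<Sum>y\<in>B. \<Sum>z\<in>C. c x y powr p * T x y z)"
      by (rule sum.cong[OF refl]) (rule sum.swap)
    also have "\<dots> = (\<Sum>x\<in>A. \<Sum>y\<in>B. c x y powr p * \<gamma>1 (x,y))"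
      using TC[of _ "\<lambda>x y. c x y powr p"] by simp
    finally show ?thesis by (simp add: wcost_box[OF fA fB s1])
  qed
  have w2: "wcost p c \<gamma>2 = (\<Sum>x\<in>A. \<Sum>z\<in>C. \<Sum>y\<in>B. c y z powr p * T x y z)"
  proof -
    have "(\<Sum>x\<in>A. \<Sum>z\<in>C. \<Sum>y\<in>B. c y z powr p * T x y z) = (\<Sum>x\<in>A. \<Sum>y\<in>B. \<Sum>z\<in>C. c y z powr p * T x y z)"
      by (rule sum.cong[OF refl]) (rule sum.swap)
    also have "\<dots> = (\<Sum>y\<in>B. \<Sum>x\<in>A. \<Sum>z\<in>C. c y z powr p * T x y z)"
      by (rule sum.swap)
    also have "\<dots> = (\<Sum>y\<in>B. \<Sum>z\<in>C. \<Sum>x\<in>A. c y z powr p * T x y z)"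
      by (rule sum.cong[OF refl]) (rule sum.swap)
    also have "\<dots> = (\<Sum>y\<in>B. \<Sum>z\<in>C. c y z powr p * \<gamma>2 (y,z))"
      using TA[of _ "\<lambda>y z. c y z powr p"] by simp
    finally show ?thesis by (simp add: wcost_box[OF fB fC s2])
  qed
  define I where "I = A \<times> (C \<times> B)"
  have fI: "finite I" using fA fB fC by (simp add: I_def)
  have split3: "(\<Sum>i\<in>I. g i) = (\<Sum>x\<in>A. \<Sum>z\<in>C. \<Sum>y\<in>B. g (x,(z,y)))" for g :: "_ \<Rightarrow> real"
    by (simp add: I_def sum_prod_split)
  define a where "a i = c (fst i) (snd (snd i))" for i :: "'x \<times> 'x \<times> 'x"
  define b where "b i = c (snd (snd i)) (fst (snd i))" for i :: "'x \<times> 'x \<times> 'x"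
  define w where "w i = T (fst i) (snd (snd i)) (fst (snd i))" for i :: "'x \<times> 'x \<times> 'x"
  have wnn: "i \<in> I \<Longrightarrow> 0 \<le> w i" for i using Tnn by (auto simp: w_def I_def)
  have "wcost p c (gl \<beta> \<gamma>1 \<gamma>2) \<le> (\<Sum>i\<in>I. (a i + b i) powr p * w i)"
  proof -
    have "wcost p c (gl \<beta> \<gamma>1 \<gamma>2) = (\<Sum>i\<in>I. c (fst i) (fst (snd i)) powr p * w i)"
      by (simp add: w0 split3 w_def)
    also have "\<dots> \<le> (\<Sum>i\<in>I. (a i + b i) powr p * w i)"
    proof (intro sum_mono mult_right_mono)
      fix i assume i: "i \<in> I"
      show "c (fst i) (fst (snd i)) powr p \<le> (a i + b i) powr p"
        by (rule powr_mono2) (use p cnn tri i in \<open>auto simp: a_def b_def I_def A_def B_def C_def\<close>)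
      show "0 \<le> w i" by (rule wnn[OF i])
    qed
    finally show ?thesis .
  qed
  then have "wcost p c (gl \<beta> \<gamma>1 \<gamma>2) powr (1/p) \<le> (\<Sum>i\<in>I. (a i + b i) powr p * w i) powr (1/p)"
    by (intro powr_mono2) (use p in \<open>auto intro: wcost_nonneg knn\<close>)
  also have "\<dots> \<le> (\<Sum>i\<in>I. a i powr p * w i) powr (1/p) + (\<Sum>i\<in>I. b i powr p * w i) powr (1/p)"
    by (rule minkowski[OF fI _ _ wnn p]) (auto simp: a_def b_def cnn)
  also have "(\<Sum>i\<in>I. a i powr p * w i) = wcost p c \<gamma>1" by (simp add: w1 split3 a_def w_def)
  also have "(\<Sum>i\<in>I. b i powr p * w i) = wcost p c \<gamma>2" by (simp add: w2 split3 b_def w_def)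
  finally show ?thesis .
qed



definition Pm :: "'x set \<Rightarrow> ('x \<Rightarrow> real) set" where
  "Pm X = {\<mu>. pmeas \<mu> \<and> fsupp \<mu> \<subseteq> X}"

lemma W_nonneg: "0 \<le> wasserstein p c \<mu> \<nu>"
  by (simp add: wasserstein_IW)

lemma sw_coupling:
  assumes g: "\<gamma> \<in> couplings \<mu> \<nu>"
  shows "(\<lambda>z. \<gamma> (snd z, fst z)) \<in> couplings \<nu> \<mu>"
    "wcost p c (\<lambda>z. \<gamma> (snd z, fst z)) = wcost p (\<lambda>x y. c y x) \<gamma>"
proof -
  define A where "A = fst ` fsupp \<gamma>"
  define B where "B = snd ` fsupp \<gamma>"
  have f: "finite A" "finite B" using g by (auto simp: A_def B_def couplings_def)
  have s: "fsupp \<gamma> \<subseteq> A \<times> B" unfolding A_def B_def by (auto intro: rev_image_eqI)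
  have s': "fsupp (\<lambda>z. \<gamma> (snd z, fst z)) \<subseteq> B \<times> A" using s by (auto simp: fsupp_def)
  have n: "0 \<le> \<gamma> z" for z using g by (rule couplings_nonneg)
  note m = couplings_box_use[OF g f s]
  show "(\<lambda>z. \<gamma> (snd z, fst z)) \<in> couplings \<nu> \<mu>"
    using m by (subst couplings_box[OF f(2) f(1) s']) (auto simp: n)
  show "wcost p c (\<lambda>z. \<gamma> (snd z, fst z)) = wcost p (\<lambda>x y. c y x) \<gamma>"
    by (simp add: wcost_box[OF f(2) f(1) s'] wcost_box[OF f s] sum.swap[of _ A])
qed

lemma W_commute:
  assumes "\<And>x y. c x y = c y x"
  shows "wasserstein p c \<mu> \<nu> = wasserstein p c \<nu> \<mu>"
proof -
  have cc: "(\<lambda>x y. c y x) = c" using assms by (intro ext) auto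
  have sub: "{wcost p c \<pi> | \<pi>. \<pi> \<in> couplings \<mu>' \<nu>'} \<subseteq> {wcost p c \<pi> | \<pi>. \<pi> \<in> couplings \<nu>' \<mu>'}" for \<mu>' \<nu>'
  proof
    fix r assume "r \<in> {wcost p c \<pi> | \<pi>. \<pi> \<in> couplings \<mu>' \<nu>'}"
    then obtain \<pi> where pi: "\<pi> \<in> couplings \<mu>' \<nu>'" "r = wcost p c \<pi>" by auto
    have 1: "(\<lambda>z. \<pi> (snd z, fst z)) \<in> couplings \<nu>' \<mu>'" by (rule sw_coupling(1)[OF pi(1)])
    have 2: "r = wcost p c (\<lambda>z. \<pi> (snd z, fst z))" using sw_coupling(2)[OF pi(1), of p c] cc pi(2) by simp
    show "r \<in> {wcost p c \<pi> | \<pi>. \<pi> \<in> couplings \<nu>' \<mu>'}"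
      using 1 2 by blast
  qed
  have "{wcost p c \<pi> | \<pi>. \<pi> \<in> couplings \<mu> \<nu>} = {wcost p c \<pi> | \<pi>. \<pi> \<in> couplings \<nu> \<mu>}"
    using sub[of \<mu> \<nu>] sub[of \<nu> \<mu>] by blast
  then show ?thesis unfolding wasserstein_IW IW_def by simp
qed

lemma W_approx:
  assumes "pmeas \<mu>" "pmeas \<nu>" "1 \<le> p" "0 < \<epsilon>"
  shows "\<exists>\<gamma>\<in>couplings \<mu> \<nu>. wcost p c \<gamma> powr (1/p) < wasserstein p c \<mu> \<nu> + \<epsilon>"
proof -
  define r where "r = wasserstein p c \<mu> \<nu> + \<epsilon>"
  have r: "0 < r" using W_nonneg[of p c \<mu> \<nu>] assms by (simp add: r_def)
  have "wasserstein p c \<mu> \<nu> < r" using assms by (simp add: r_def)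
  then have "IW p c \<mu> \<nu> < r powr p" using W_less_iff[OF couplings_ne[OF assms(1,2)] assms(3) r] by simp
  then obtain \<gamma> where g: "\<gamma> \<in> couplings \<mu> \<nu>" "wcost p c \<gamma> < r powr p"
    using IW_approx[OF couplings_ne[OF assms(1,2)]] by blast
  have "wcost p c \<gamma> powr (1/p) < (r powr p) powr (1/p)"
  proof -
    have "0 \<le> wcost p c \<gamma>" by (rule wcost_nonneg) (rule couplings_nonneg[OF g(1)])
    then show ?thesis using powr_less_mono2[of "1/p" "wcost p c \<gamma>" "r powr p"] g assms by auto
  qed
  also have "\<dots> = r" using r assms by (simp add: powr_powr)
  finally show ?thesis using g(1) unfolding r_def by blast
qed

lemma W_triangle:
  assumes ms: "Metric_space X c" and p: "1 \<le> p" and mem: "\<mu> \<in> Pm X" "\<nu> \<in> Pm X" "\<zeta> \<in> Pm X"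
  shows "wasserstein p c \<mu> \<zeta> \<le> wasserstein p c \<mu> \<nu> + wasserstein p c \<nu> \<zeta>"
proof (rule field_le_epsilon)
  fix e :: real assume e: "0 < e"
  have pm: "pmeas \<mu>" "pmeas \<nu>" "pmeas \<zeta>" using mem by (auto simp: Pm_def)
  obtain \<gamma>1 where g1: "\<gamma>1 \<in> couplings \<mu> \<nu>" "wcost p c \<gamma>1 powr (1/p) < wasserstein p c \<mu> \<nu> + e/2"
    using W_approx[OF pm(1,2) p, of "e/2" c] e by auto
  obtain \<gamma>2 where g2: "\<gamma>2 \<in> couplings \<nu> \<zeta>" "wcost p c \<gamma>2 powr (1/p) < wasserstein p c \<nu> \<zeta> + e/2"
    using W_approx[OF pm(2,3) p, of "e/2" c] e by auto
  have tri: "c x z \<le> c x y + c y z" if "x \<in> fsupp \<mu>" "y \<in> fsupp \<nu>" "z \<in> fsupp \<zeta>" for x y z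
  proof -
    have "x \<in> X" "y \<in> X" "z \<in> X" using that mem by (auto simp: Pm_def)
    then show ?thesis by (rule Metric_space.triangle[OF ms])
  qed
  have cnn: "0 \<le> c x y" for x y using Metric_space.nonneg[OF ms] .
  note gl = glue[OF g1(1) g2(1) _ cnn tri, of p]
  have I0: "0 \<le> IW p c \<mu> \<zeta>" by (rule IW_nonneg[OF couplings_ne[OF pm(1,3)]])
  have "wasserstein p c \<mu> \<zeta> = IW p c \<mu> \<zeta> powr (1/p)" by (rule wasserstein_IW)
  also have "\<dots> \<le> wcost p c (gl \<nu> \<gamma>1 \<gamma>2) powr (1/p)"
    by (rule powr_mono2) (use p I0 IW_le[OF gl(1)] in auto)
  also have "\<dots> \<le> wcost p c \<gamma>1 powr (1/p) + wcost p c \<gamma>2 powr (1/p)"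
    by (rule glue_tri[OF g1(1) g2(1) p cnn tri])
  also have "\<dots> \<le> wasserstein p c \<mu> \<nu> + wasserstein p c \<nu> \<zeta> + e" using g1(2) g2(2) by simp
  finally show "wasserstein p c \<mu> \<zeta> \<le> wasserstein p c \<mu> \<nu> + wasserstein p c \<nu> \<zeta> + e" .
qed



lemma W_pos:
  assumes ms: "Metric_space X c" and p: "1 \<le> p" and mem: "\<mu> \<in> Pm X" "\<nu> \<in> Pm X" and ne: "\<mu> x0 \<noteq> \<nu> x0"
  shows "0 < IW p c \<mu> \<nu>"
proof -
  have pm: "pmeas \<mu>" "pmeas \<nu>" using mem by (auto simp: Pm_def)
  define S where "S = fsupp \<mu> \<union> fsupp \<nu>"
  have fS: "finite S" using pm by (auto simp: S_def pmeas_def)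
  have SX: "S \<subseteq> X" using mem by (auto simp: S_def Pm_def)
  have x0: "x0 \<in> S" using ne by (auto simp: S_def fsupp_def)
  define D where "D = insert 1 ((\<lambda>z. c (fst z) (snd z)) ` {z \<in> S \<times> S. fst z \<noteq> snd z})"
  have fD: "finite D" using fS by (auto simp: D_def)
  define m where "m = Min D"
  have Dpos: "\<forall>r\<in>D. 0 < r"
  proof
    fix r assume "r \<in> D"
    then consider "r = 1" | x y where "x \<in> S" "y \<in> S" "x \<noteq> y" "r = c x y" by (auto simp: D_def)
    then show "0 < r"
    proof cases
      case (2 x y)
      then have "c x y \<noteq> 0" using Metric_space.zero[OF ms, of x y] SX by auto
      then show ?thesis using Metric_space.nonneg[OF ms, of x y] 2 by auto
    qed simp
  qed
  have mpos: "0 < m" unfolding m_def using fD Dpos by (simp add: D_def)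
  have mle: "m \<le> c x y" if "x \<in> S" "y \<in> S" "x \<noteq> y" for x y
  proof -
    have "c x y \<in> D" unfolding D_def using that by (intro insertI2 image_eqI[of _ _ "(x,y)"]) auto
    then show ?thesis unfolding m_def by (rule Min_le[OF fD])
  qed
  define \<delta> where "\<delta> = \<bar>\<mu> x0 - \<nu> x0\<bar>"
  have \<delta>: "0 < \<delta>" using ne by (simp add: \<delta>_def)
  have cnn: "0 \<le> c x y" for x y using Metric_space.nonneg[OF ms] .
  have bound: "m powr p * \<delta> \<le> wcost p c \<gamma>" if g: "\<gamma> \<in> couplings \<mu> \<nu>" for \<gamma>
  proof -
    have s: "fsupp \<gamma> \<subseteq> S \<times> S" using couplings_supp[OF g] by (auto simp: S_def)
    have n: "0 \<le> \<gamma> z" for z using g by (rule couplings_nonneg)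
    note mg = couplings_box_use[OF g fS fS s]
    have wc: "wcost p c \<gamma> = (\<Sum>x\<in>S. \<Sum>y\<in>S. c x y powr p * \<gamma> (x,y))" by (rule wcost_box[OF fS fS s])
    have tn: "0 \<le> c x y powr p * \<gamma> (x,y)" for x y using n by simp
    have mono_off: "(\<Sum>y\<in>S - {x0}. m powr p * \<gamma> (x0,y)) \<le> (\<Sum>y\<in>S - {x0}. c x0 y powr p * \<gamma> (x0,y))"
      by (intro sum_mono mult_right_mono powr_mono2) (use p mle x0 mpos n in auto)
    have mono_off2: "(\<Sum>x\<in>S - {x0}. m powr p * \<gamma> (x,x0)) \<le> (\<Sum>x\<in>S - {x0}. c x x0 powr p * \<gamma> (x,x0))"
      by (intro sum_mono mult_right_mono powr_mono2) (use p mle x0 mpos n in auto)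
    have d1: "\<gamma> (x0,x0) \<le> \<nu> x0"
    proof -
      have "\<gamma> (x0,x0) \<le> (\<Sum>x\<in>S. \<gamma> (x,x0))" by (rule member_le_sum) (use fS x0 n in auto)
      then show ?thesis using mg(2) by simp
    qed
    have d2: "\<gamma> (x0,x0) \<le> \<mu> x0"
    proof -
      have "\<gamma> (x0,x0) \<le> (\<Sum>y\<in>S. \<gamma> (x0,y))" by (rule member_le_sum) (use fS x0 n in auto)
      then show ?thesis using mg(1) by simp
    qed
    have r1: "(\<Sum>y\<in>S - {x0}. \<gamma> (x0,y)) = \<mu> x0 - \<gamma> (x0,x0)"
      using mg(1)[of x0] sum.remove[OF fS x0, of "\<lambda>y. \<gamma> (x0,y)"] by simp
    have r2: "(\<Sum>x\<in>S - {x0}. \<gamma> (x,x0)) = \<nu> x0 - \<gamma> (x0,x0)"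
      using mg(2)[of x0] sum.remove[OF fS x0, of "\<lambda>x. \<gamma> (x,x0)"] by simp
    show ?thesis
    proof (cases "\<nu> x0 < \<mu> x0")
      case True
      have "m powr p * \<delta> \<le> m powr p * (\<mu> x0 - \<gamma> (x0,x0))"
        using d1 True by (intro mult_left_mono) (auto simp: \<delta>_def)
      also have "\<dots> = (\<Sum>y\<in>S - {x0}. m powr p * \<gamma> (x0,y))" by (simp add: r1 sum_distrib_left[symmetric])
      also have "\<dots> \<le> (\<Sum>y\<in>S - {x0}. c x0 y powr p * \<gamma> (x0,y))" by (rule mono_off)
      also have "\<dots> \<le> (\<Sum>y\<in>S. c x0 y powr p * \<gamma> (x0,y))" by (rule sum_mono2) (use fS tn in auto)
      also have "\<dots> \<le> (\<Sum>x\<in>S. \<Sum>y\<in>S. c x y powr p * \<gamma> (x,y))"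
        by (rule member_le_sum[of x0 S "\<lambda>x. \<Sum>y\<in>S. c x y powr p * \<gamma> (x,y)"]) (use fS x0 tn in \<open>auto intro: sum_nonneg\<close>)
      finally show ?thesis using wc by simp
    next
      case False
      then have lt: "\<mu> x0 < \<nu> x0" using ne by auto
      have "m powr p * \<delta> \<le> m powr p * (\<nu> x0 - \<gamma> (x0,x0))"
        using d2 lt by (intro mult_left_mono) (auto simp: \<delta>_def)
      also have "\<dots> = (\<Sum>x\<in>S - {x0}. m powr p * \<gamma> (x,x0))" by (simp add: r2 sum_distrib_left[symmetric])
      also have "\<dots> \<le> (\<Sum>x\<in>S - {x0}. c x x0 powr p * \<gamma> (x,x0))" by (rule mono_off2)
      also have "\<dots> \<le> (\<Sum>x\<in>S. c x x0 powr p * \<gamma> (x,x0))" by (rule sum_mono2) (use fS tn in auto)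
      also have "\<dots> \<le> (\<Sum>x\<in>S. \<Sum>y\<in>S. c x y powr p * \<gamma> (x,y))"
        by (intro sum_mono member_le_sum) (use fS x0 tn in auto)
      finally show ?thesis using wc by simp
    qed
  qed
  have "m powr p * \<delta> \<le> IW p c \<mu> \<nu>"
    unfolding IW_def by (rule cInf_greatest) (use couplings_ne[OF pm] bound in auto)
  moreover have "0 < m powr p * \<delta>" using mpos \<delta> by simp
  ultimately show ?thesis by linarith
qed

lemma W_metric:
  assumes ms: "Metric_space X c" and p: "1 \<le> p"
  shows "Metric_space (Pm X) (wasserstein p c)"
proof
  fix \<mu> \<nu> \<zeta>
  show "0 \<le> wasserstein p c \<mu> \<nu>" by (rule W_nonneg)
  show "wasserstein p c \<mu> \<nu> = wasserstein p c \<nu> \<mu>" by (rule W_commute) (rule Metric_space.commute[OF ms])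
  show "wasserstein p c \<mu> \<zeta> \<le> wasserstein p c \<mu> \<nu> + wasserstein p c \<nu> \<zeta>"
    if "\<mu> \<in> Pm X" "\<nu> \<in> Pm X" "\<zeta> \<in> Pm X" using W_triangle[OF ms p that] .
  show "(wasserstein p c \<mu> \<nu> = 0) = (\<mu> = \<nu>)" if mem: "\<mu> \<in> Pm X" "\<nu> \<in> Pm X"
  proof
    assume "\<mu> = \<nu>"
    have "IW p c \<mu> \<mu> = 0"
      by (rule IW_self) (use mem Metric_space.zero[OF ms] p in \<open>auto simp: Pm_def\<close>)
    then show "wasserstein p c \<mu> \<nu> = 0" using \<open>\<mu> = \<nu>\<close> by (simp add: wasserstein_IW)
  next
    assume w0: "wasserstein p c \<mu> \<nu> = 0"
    show "\<mu> = \<nu>"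
    proof (rule ccontr)
      assume "\<mu> \<noteq> \<nu>"
      then obtain x0 where "\<mu> x0 \<noteq> \<nu> x0" by auto
      then have "0 < IW p c \<mu> \<nu>" by (rule W_pos[OF ms p mem])
      then have "0 < wasserstein p c \<mu> \<nu>" by (simp add: wasserstein_IW)
      then show False using w0 by simp
    qed
  qed
qed

lemma max_metric:
  assumes "Metric_space M1 d1" "Metric_space M2 d2"
  shows "Metric_space (M1 \<times> M2) (max_dist d1 d2)"
proof
  fix x y z :: "_ \<times> _"
  show "0 \<le> max_dist d1 d2 x y" using Metric_space.nonneg[OF assms(1)]
    by (cases x; cases y) (auto simp: max_dist_def le_max_iff_disj)
  show "max_dist d1 d2 x y = max_dist d1 d2 y x" using Metric_space.commute[OF assms(1)] Metric_space.commute[OF assms(2)]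
    by (cases x; cases y) (auto simp: max_dist_def)
  show "(max_dist d1 d2 x y = 0) = (x = y)" if "x \<in> M1 \<times> M2" "y \<in> M1 \<times> M2"
  proof -
    obtain x1 x2 y1 y2 where xy: "x = (x1,x2)" "y = (y1,y2)" by (cases x; cases y) auto
    have mz: "max u v = 0 \<longleftrightarrow> u = 0 \<and> v = 0" if "0 \<le> u" "0 \<le> v" for u v :: real using that by linarith
    show ?thesis using that xy mz[OF Metric_space.nonneg[OF assms(1)] Metric_space.nonneg[OF assms(2)], of x1 y1 x2 y2]
      Metric_space.zero[OF assms(1), of x1 y1] Metric_space.zero[OF assms(2), of x2 y2]
      by (auto simp: max_dist_def)
  qed
  show "max_dist d1 d2 x z \<le> max_dist d1 d2 x y + max_dist d1 d2 y z" if "x \<in> M1 \<times> M2" "y \<in> M1 \<times> M2" "z \<in> M1 \<times> M2"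
  proof -
    obtain x1 x2 y1 y2 z1 z2 where xyz: "x = (x1,x2)" "y = (y1,y2)" "z = (z1,z2)" by (cases x; cases y; cases z) auto
    have "d1 x1 z1 \<le> d1 x1 y1 + d1 y1 z1" using that xyz by (intro Metric_space.triangle[OF assms(1)]) auto
    moreover have "d2 x2 z2 \<le> d2 x2 y2 + d2 y2 z2" using that xyz by (intro Metric_space.triangle[OF assms(2)]) auto
    ultimately show ?thesis using xyz by (auto simp: max_dist_def max_def)
  qed
qed



lemma real_sub_Pm: "realization X K \<phi> \<subseteq> Pm X"
  by (auto simp: realization_def Pm_def pmeas_def)

lemma sum_pm: "finite A \<Longrightarrow> finite B \<Longrightarrow> (\<Sum>z\<in>A \<times> B. pm \<mu> \<nu> z) = sum \<mu> A * sum \<nu> B"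
  by (simp add: sum_prod_split pm_def sum_product)

lemma pmeas_ne: "pmeas \<mu> \<Longrightarrow> fsupp \<mu> \<noteq> {}"
  by (auto simp: pmeas_def)

lemma pm_real:
  assumes "\<mu> \<in> realization X K \<phi>" "\<nu> \<in> realization Y L \<psi>"
  shows "pm \<mu> \<nu> \<in> realization (X \<times> Y) (prod_sc K L) (\<lambda>(x, y). (\<phi> x, \<psi> y))"
proof -
  have a: "finite (fsupp \<mu>)" "fsupp \<mu> \<subseteq> X" "\<And>x. 0 \<le> \<mu> x" "sum \<mu> (fsupp \<mu>) = 1" "\<phi> ` fsupp \<mu> \<in> K"
    using assms(1) by (auto simp: realization_def)
  have b: "finite (fsupp \<nu>)" "fsupp \<nu> \<subseteq> Y" "\<And>x. 0 \<le> \<nu> x" "sum \<nu> (fsupp \<nu>) = 1" "\<psi> ` fsupp \<nu> \<in> L"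
    using assms(2) by (auto simp: realization_def)
  have ne: "fsupp \<mu> \<noteq> {}" "fsupp \<nu> \<noteq> {}" using a(4) b(4) by auto
  have im: "(\<lambda>(x, y). (\<phi> x, \<psi> y)) ` (fsupp \<mu> \<times> fsupp \<nu>) = (\<phi> ` fsupp \<mu>) \<times> (\<psi> ` fsupp \<nu>)" by auto
  have "(\<phi> ` fsupp \<mu>) \<times> (\<psi> ` fsupp \<nu>) \<in> prod_sc K L"
    using a b ne by (auto simp: prod_sc_def)
  moreover have "sum (pm \<mu> \<nu>) (fsupp \<mu> \<times> fsupp \<nu>) = 1" using a b by (simp add: sum_pm)
  moreover have "0 \<le> pm \<mu> \<nu> z" for z using a b by (simp add: pm_def)
  ultimately show ?thesis
    unfolding realization_def mem_Collect_eq fsupp_pm im using a b by auto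
qed

lemma fsupp_m1:
  assumes "finite (fsupp \<pi>)" "\<And>z. 0 \<le> \<pi> z"
  shows "fsupp (m1 \<pi>) = fst ` fsupp \<pi>"
proof (intro set_eqI iffI)
  fix x assume "x \<in> fsupp (m1 \<pi>)"
  then have "(\<Sum>y\<in>snd ` fsupp \<pi>. \<pi> (x,y)) \<noteq> 0" by (simp add: fsupp_def m1_def)
  then obtain y where "\<pi> (x,y) \<noteq> 0" by (meson sum.neutral)
  then show "x \<in> fst ` fsupp \<pi>" by (force simp: fsupp_def)
next
  fix x assume "x \<in> fst ` fsupp \<pi>"
  then obtain y where y: "(x,y) \<in> fsupp \<pi>" by auto
  have "0 < \<pi> (x,y)" using y assms(2)[of "(x,y)"] by (auto simp: fsupp_def)
  also have "\<pi> (x,y) \<le> (\<Sum>y\<in>snd ` fsupp \<pi>. \<pi> (x,y))"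
    by (rule member_le_sum) (use y assms in \<open>auto intro: rev_image_eqI\<close>)
  finally show "x \<in> fsupp (m1 \<pi>)" by (simp add: fsupp_def m1_def)
qed

lemma fsupp_m2:
  assumes "finite (fsupp \<pi>)" "\<And>z. 0 \<le> \<pi> z"
  shows "fsupp (m2 \<pi>) = snd ` fsupp \<pi>"
proof (intro set_eqI iffI)
  fix y assume "y \<in> fsupp (m2 \<pi>)"
  then have "(\<Sum>x\<in>fst ` fsupp \<pi>. \<pi> (x,y)) \<noteq> 0" by (simp add: fsupp_def m2_def)
  then obtain x where "\<pi> (x,y) \<noteq> 0" by (meson sum.neutral)
  then show "y \<in> snd ` fsupp \<pi>" by (force simp: fsupp_def)
next
  fix y assume "y \<in> snd ` fsupp \<pi>"
  then obtain x where x: "(x,y) \<in> fsupp \<pi>" by auto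
  have "0 < \<pi> (x,y)" using x assms(2)[of "(x,y)"] by (auto simp: fsupp_def)
  also have "\<pi> (x,y) \<le> (\<Sum>x\<in>fst ` fsupp \<pi>. \<pi> (x,y))"
    by (rule member_le_sum) (use x assms in \<open>auto intro: rev_image_eqI\<close>)
  finally show "y \<in> fsupp (m2 \<pi>)" by (simp add: fsupp_def m2_def)
qed

lemma sum_box:
  assumes "finite (fsupp \<pi>)"
  shows "(\<Sum>z\<in>fst ` fsupp \<pi> \<times> snd ` fsupp \<pi>. \<pi> z) = sum \<pi> (fsupp \<pi>)"
  by (rule fsupp_sum) (use assms in \<open>auto intro: rev_image_eqI\<close>)

lemma m_real:
  assumes "\<pi> \<in> realization (X \<times> Y) (prod_sc K L) (\<lambda>(x, y). (\<phi> x, \<psi> y))"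
  shows "m1 \<pi> \<in> realization X K \<phi>" "m2 \<pi> \<in> realization Y L \<psi>"
proof -
  have a: "finite (fsupp \<pi>)" "fsupp \<pi> \<subseteq> X \<times> Y" "\<And>x. 0 \<le> \<pi> x" "sum \<pi> (fsupp \<pi>) = 1"
    "(\<lambda>(x, y). (\<phi> x, \<psi> y)) ` fsupp \<pi> \<in> prod_sc K L"
    using assms by (auto simp: realization_def)
  have s1: "sum (m1 \<pi>) (fst ` fsupp \<pi>) = 1" "sum (m2 \<pi>) (snd ` fsupp \<pi>) = 1"
    using sum_box[OF a(1)] a(1,4) by (simp_all add: m1_def m2_def sum_prod_split, subst sum.swap, simp)
  have k: "fst ` ((\<lambda>(x, y). (\<phi> x, \<psi> y)) ` fsupp \<pi>) = \<phi> ` fst ` fsupp \<pi>"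
    "snd ` ((\<lambda>(x, y). (\<phi> x, \<psi> y)) ` fsupp \<pi>) = \<psi> ` snd ` fsupp \<pi>" by force+
  have n1: "0 \<le> m1 \<pi> x" for x unfolding m1_def using a(3) by (auto intro!: sum_nonneg)
  have n2: "0 \<le> m2 \<pi> x" for x unfolding m2_def using a(3) by (auto intro!: sum_nonneg)
  have kk: "\<phi> ` fst ` fsupp \<pi> \<in> K" "\<psi> ` snd ` fsupp \<pi> \<in> L" using a(5) k by (auto simp: prod_sc_def)
  have sx: "fst ` fsupp \<pi> \<subseteq> X" "snd ` fsupp \<pi> \<subseteq> Y" using a(2) by auto
  show "m1 \<pi> \<in> realization X K \<phi>"
    unfolding realization_def mem_Collect_eq fsupp_m1[OF a(1,3)] using a(1) s1 kk sx n1 by auto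
  show "m2 \<pi> \<in> realization Y L \<psi>"
    unfolding realization_def mem_Collect_eq fsupp_m2[OF a(1,3)] using a(1) s1 kk sx n2 by auto
qed



definition Hh :: "real \<Rightarrow> ('a \<times> 'b \<Rightarrow> real) \<Rightarrow> ('a \<times> 'b \<Rightarrow> real)" where
  "Hh t \<pi> = (\<lambda>z. t * \<pi> z + (1 - t) * pm (m1 \<pi>) (m2 \<pi>) z)"

lemma H_real:
  assumes sc: "is_simplicial_complex V K" "is_simplicial_complex W L"
    and pi: "\<pi> \<in> realization (X \<times> Y) (prod_sc K L) (\<lambda>(x, y). (\<phi> x, \<psi> y))" and t: "0 \<le> t" "t \<le> 1"
  shows "Hh t \<pi> \<in> realization (X \<times> Y) (prod_sc K L) (\<lambda>(x, y). (\<phi> x, \<psi> y))"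
proof -
  have a: "finite (fsupp \<pi>)" "fsupp \<pi> \<subseteq> X \<times> Y" "\<And>x. 0 \<le> \<pi> x" "sum \<pi> (fsupp \<pi>) = 1"
    "(\<lambda>(x, y). (\<phi> x, \<psi> y)) ` fsupp \<pi> \<in> prod_sc K L"
    using pi by (auto simp: realization_def)
  note mr = m_real[OF pi]
  define A where "A = fst ` fsupp \<pi>"
  define B where "B = snd ` fsupp \<pi>"
  have fA: "finite A" "finite B" using a(1) by (auto simp: A_def B_def)
  have fs1: "fsupp (m1 \<pi>) = A" "fsupp (m2 \<pi>) = B" using fsupp_m1[OF a(1,3)] fsupp_m2[OF a(1,3)] by (auto simp: A_def B_def)
  have sub: "fsupp (Hh t \<pi>) \<subseteq> A \<times> B"
  proof
    fix z assume z: "z \<in> fsupp (Hh t \<pi>)"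
    show "z \<in> A \<times> B"
    proof (rule ccontr)
      assume nz: "z \<notin> A \<times> B"
      then have "\<pi> z = 0" unfolding A_def B_def by (cases z) (auto simp: fsupp_def intro: rev_image_eqI)
      moreover have "pm (m1 \<pi>) (m2 \<pi>) z = 0" using nz fs1 by (cases z) (auto simp: pm_def fsupp_def)
      ultimately show False using z by (simp add: fsupp_def Hh_def)
    qed
  qed
  have fin: "finite (fsupp (Hh t \<pi>))" using sub fA finite_subset by blast
  have ABX: "A \<times> B \<subseteq> X \<times> Y" using a(2) by (auto simp: A_def B_def)
  have nn: "0 \<le> Hh t \<pi> z" for z
    using t a(3) mr by (auto simp: Hh_def pm_def realization_def intro!: add_nonneg_nonneg mult_nonneg_nonneg)
  have s1: "sum \<pi> (A \<times> B) = 1" using sum_box[OF a(1)] a(4) by (simp add: A_def B_def)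
  have s2: "sum (pm (m1 \<pi>) (m2 \<pi>)) (A \<times> B) = 1"
    using mr fA fs1 by (simp add: sum_pm realization_def)
  have sH: "sum (Hh t \<pi>) (fsupp (Hh t \<pi>)) = 1"
  proof -
    have "sum (Hh t \<pi>) (fsupp (Hh t \<pi>)) = sum (Hh t \<pi>) (A \<times> B)" by (rule fsupp_sum[symmetric]) (use fA sub in auto)
    also have "\<dots> = t * sum \<pi> (A \<times> B) + (1 - t) * sum (pm (m1 \<pi>) (m2 \<pi>)) (A \<times> B)"
      by (simp add: Hh_def sum.distrib sum_distrib_left)
    finally show ?thesis using s1 s2 by simp
  qed
  have ne: "fsupp (Hh t \<pi>) \<noteq> {}" using sH by auto
  have kA: "\<phi> ` A \<in> K" "\<psi> ` B \<in> L" using mr fs1 by (auto simp: realization_def)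
  have clK: "\<tau> \<in> K" if "\<tau> \<noteq> {}" "\<tau> \<subseteq> \<phi> ` A" for \<tau> using sc(1) kA(1) that unfolding is_simplicial_complex_def by blast
  have clL: "\<tau> \<in> L" if "\<tau> \<noteq> {}" "\<tau> \<subseteq> \<psi> ` B" for \<tau> using sc(2) kA(2) that unfolding is_simplicial_complex_def by blast
  have simp: "(\<lambda>(x, y). (\<phi> x, \<psi> y)) ` fsupp (Hh t \<pi>) \<in> prod_sc K L"
    unfolding prod_sc_def mem_Collect_eq
  proof (intro conjI)
    show "(\<lambda>(x, y). (\<phi> x, \<psi> y)) ` fsupp (Hh t \<pi>) \<noteq> {}" using ne by auto
    show "finite ((\<lambda>(x, y). (\<phi> x, \<psi> y)) ` fsupp (Hh t \<pi>))" using fin by auto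
    show "fst ` (\<lambda>(x, y). (\<phi> x, \<psi> y)) ` fsupp (Hh t \<pi>) \<in> K"
      by (rule clK) (use ne sub in force)+
    show "snd ` (\<lambda>(x, y). (\<phi> x, \<psi> y)) ` fsupp (Hh t \<pi>) \<in> L"
      by (rule clL) (use ne sub in force)+
  qed
  show ?thesis unfolding realization_def mem_Collect_eq using fin sub ABX nn sH simp by blast
qed

lemma m1_pm:
  assumes "pmeas \<mu>" "pmeas \<nu>" shows "m1 (pm \<mu> \<nu>) = \<mu>"
proof
  fix x
  have "snd ` fsupp (pm \<mu> \<nu>) = fsupp \<nu>" using pmeas_ne[OF assms(1)] by (simp add: fsupp_pm)
  then have "m1 (pm \<mu> \<nu>) x = (\<Sum>y\<in>fsupp \<nu>. \<mu> x * \<nu> y)" by (simp add: m1_def pm_def)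
  also have "\<dots> = \<mu> x" using assms(2) by (simp add: sum_distrib_left[symmetric] pmeas_def)
  finally show "m1 (pm \<mu> \<nu>) x = \<mu> x" .
qed

lemma m2_pm:
  assumes "pmeas \<mu>" "pmeas \<nu>" shows "m2 (pm \<mu> \<nu>) = \<nu>"
proof
  fix y
  have "fst ` fsupp (pm \<mu> \<nu>) = fsupp \<mu>" using pmeas_ne[OF assms(2)] by (simp add: fsupp_pm)
  then have "m2 (pm \<mu> \<nu>) y = (\<Sum>x\<in>fsupp \<mu>. \<mu> x * \<nu> y)" by (simp add: m2_def pm_def)
  also have "\<dots> = \<nu> y" using assms(1) by (simp add: sum_distrib_right[symmetric] pmeas_def)
  finally show "m2 (pm \<mu> \<nu>) y = \<nu> y" .
qed



lemma real_pmeas: "\<mu> \<in> realization X K \<phi> \<Longrightarrow> pmeas \<mu>"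
  by (auto simp: realization_def pmeas_def)

lemma real_supp: "\<mu> \<in> realization X K \<phi> \<Longrightarrow> fsupp \<mu> \<subseteq> X"
  by (auto simp: realization_def)

lemma H_est:
  assumes msX: "Metric_space X d" and msY: "Metric_space Y e" and p: "1 \<le> p"
    and pi: "\<pi> \<in> realization (X \<times> Y) (prod_sc K L) (\<lambda>(x, y). (\<phi> x, \<psi> y))"
    and pi': "\<pi>' \<in> realization (X \<times> Y) (prod_sc K L) (\<lambda>(x, y). (\<phi> x, \<psi> y))"
    and G: "\<Gamma> \<in> couplings \<pi> \<pi>'"
    and t: "0 \<le> t" "t \<le> 1" and t': "0 \<le> t'" "t' \<le> 1"
  shows "\<exists>\<Theta>\<in>couplings (Hh t \<pi>) (Hh t' \<pi>'). wcost p (max_dist d e) \<Theta> \<le>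
      3 * wcost p (max_dist d e) \<Gamma> + \<bar>t - t'\<bar> * (2 powr p * (max (wcost p (max_dist d e) (pm \<pi> (pm (m1 \<pi>) (m2 \<pi>))))
          (wcost p (max_dist d e) (pm (pm (m1 \<pi>) (m2 \<pi>)) \<pi>)) + 2 * wcost p (max_dist d e) \<Gamma>))"
proof -
  define D where "D = max_dist d e"
  define \<rho> where "\<rho> = pm (m1 \<pi>) (m2 \<pi>)"
  define \<rho>' where "\<rho>' = pm (m1 \<pi>') (m2 \<pi>')"
  define C where "C = wcost p D \<Gamma>"
  define K0 where "K0 = max (wcost p D (pm \<pi> \<rho>)) (wcost p D (pm \<rho> \<pi>))"
  have DM: "Metric_space (X \<times> Y) D" unfolding D_def by (rule max_metric[OF msX msY])
  have dnn: "0 \<le> d x y" for x y by (rule Metric_space.nonneg[OF msX])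
  have enn: "0 \<le> e x y" for x y by (rule Metric_space.nonneg[OF msY])
  have Dnn: "0 \<le> D x y" for x y by (rule Metric_space.nonneg[OF DM])
  note mr = m_real[OF pi] and mr' = m_real[OF pi']
  have rr: "\<rho> \<in> realization (X \<times> Y) (prod_sc K L) (\<lambda>(x, y). (\<phi> x, \<psi> y))" unfolding \<rho>_def by (rule pm_real[OF mr])
  have rr': "\<rho>' \<in> realization (X \<times> Y) (prod_sc K L) (\<lambda>(x, y). (\<phi> x, \<psi> y))" unfolding \<rho>'_def by (rule pm_real[OF mr'])
  have pmeas: "pmeas \<pi>" "pmeas \<pi>'" "pmeas \<rho>" "pmeas \<rho>'" "pmeas (m1 \<pi>)" "pmeas (m2 \<pi>)"
    using pi pi' rr rr' mr by (auto intro: real_pmeas)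
  have supps: "fsupp \<pi> \<subseteq> X \<times> Y" "fsupp \<pi>' \<subseteq> X \<times> Y" "fsupp \<rho> \<subseteq> X \<times> Y" "fsupp \<rho>' \<subseteq> X \<times> Y"
    using pi pi' rr rr' by (auto dest: real_supp)
  have tri: "D x z \<le> D x y + D y z" if "x \<in> X \<times> Y" "y \<in> X \<times> Y" "z \<in> X \<times> Y" for x y z
    using Metric_space.triangle[OF DM that] .
  have C0: "0 \<le> C" unfolding C_def by (rule wcost_nonneg, rule couplings_nonneg[OF G])
  note p1 = push1[where d=d and e=e and p=p, OF G _ dnn enn] and p2 = push2[where d=d and e=e and p=p, OF G _ dnn enn]
  define \<Gamma>\<rho> where "\<Gamma>\<rho> = tc (pf1 \<Gamma> (snd ` fsupp \<pi>) (snd ` fsupp \<pi>')) (pf2 \<Gamma> (fst ` fsupp \<pi>) (fst ` fsupp \<pi>'))"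
  note tt = tensor[where d=d and e=e and p=p, OF p1(1) p2(1) pmeas(5,6) _ dnn enn]
  have Gr: "\<Gamma>\<rho> \<in> couplings \<rho> \<rho>'" using tt(1) p by (simp add: \<Gamma>\<rho>_def \<rho>_def \<rho>'_def)
  have CGr: "wcost p D \<Gamma>\<rho> \<le> 2 * C" using tt(2) p1(2) p2(2) p by (simp add: \<Gamma>\<rho>_def D_def C_def)
  have CGr0: "0 \<le> wcost p D \<Gamma>\<rho>" by (rule wcost_nonneg, rule couplings_nonneg[OF Gr])
  have pr: "pm \<pi> \<rho> \<in> couplings \<pi> \<rho>" by (rule pm_coupling[OF pmeas(1,3)])
  have rp: "pm \<rho> \<pi> \<in> couplings \<rho> \<pi>" by (rule pm_coupling[OF pmeas(3,1)])
  have K0a: "wcost p D (pm \<pi> \<rho>) \<le> K0" and K0b: "wcost p D (pm \<rho> \<pi>) \<le> K0" by (auto simp: K0_def)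
  have tp: "0 < 2 powr p" by simp
  show ?thesis
  proof (cases "t' \<le> t")
    case True
    define \<kappa> where "\<kappa> = gl \<rho> (pm \<pi> \<rho>) \<Gamma>\<rho>"
    note gg = glue[where c=D and p=p, OF pr Gr _ Dnn]
    have k1: "\<kappa> \<in> couplings \<pi> \<rho>'" and k2: "wcost p D \<kappa> \<le> 2 powr p * (wcost p D (pm \<pi> \<rho>) + wcost p D \<Gamma>\<rho>)"
      using gg supps tri p unfolding \<kappa>_def by (auto intro!: tri)
    have b0: "0 \<le> t - t'" "0 \<le> 1 - t" using True t by auto
    note l3 = lin3(1)[OF G k1 Gr t'(1) b0] lin3(2)[where p=p and d=D, OF G k1 Gr t'(1) b0]
    have e1: "(\<lambda>x. t' * \<pi> x + (t - t') * \<pi> x + (1 - t) * \<rho> x) = Hh t \<pi>"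
      by (rule ext) (simp add: Hh_def \<rho>_def algebra_simps)
    have e2: "(\<lambda>x. t' * \<pi>' x + (t - t') * \<rho>' x + (1 - t) * \<rho>' x) = Hh t' \<pi>'"
      by (rule ext) (simp add: Hh_def \<rho>'_def algebra_simps)
    define \<Theta> where "\<Theta> = (\<lambda>z. t' * \<Gamma> z + (t - t') * \<kappa> z + (1 - t) * \<Gamma>\<rho> z)"
    have Th: "\<Theta> \<in> couplings (Hh t \<pi>) (Hh t' \<pi>')" using l3(1) True t e1 e2 by (simp add: \<Theta>_def)
    have "wcost p D \<Theta> = t' * C + (t - t') * wcost p D \<kappa> + (1 - t) * wcost p D \<Gamma>\<rho>"
      using l3(2) True t by (simp add: \<Theta>_def C_def)
    also have "\<dots> \<le> 1 * C + (t - t') * (2 powr p * (K0 + 2 * C)) + 1 * (2 * C)"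
    proof (intro add_mono mult_mono)
      show "wcost p D \<kappa> \<le> 2 powr p * (K0 + 2 * C)"
        using k2 K0a CGr tp by (smt (verit, best) mult_left_mono)
    qed (use t t' True C0 CGr CGr0 k1 in \<open>auto intro: wcost_nonneg couplings_nonneg\<close>)
    also have "\<dots> = 3 * C + \<bar>t - t'\<bar> * (2 powr p * (K0 + 2 * C))" using True by simp
    finally show ?thesis using Th by (auto simp: D_def C_def K0_def \<rho>_def)
  next
    case False
    define \<kappa> where "\<kappa> = gl \<pi> (pm \<rho> \<pi>) \<Gamma>"
    note gg = glue[where c=D and p=p, OF rp G _ Dnn]
    have k1: "\<kappa> \<in> couplings \<rho> \<pi>'" and k2: "wcost p D \<kappa> \<le> 2 powr p * (wcost p D (pm \<rho> \<pi>) + C)"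
      using gg supps tri p unfolding \<kappa>_def C_def by (auto intro!: tri)
    have b0: "0 \<le> t' - t" "0 \<le> 1 - t'" using False t' by auto
    note l3 = lin3(1)[OF G k1 Gr t(1) b0] lin3(2)[where p=p and d=D, OF G k1 Gr t(1) b0]
    have e1: "(\<lambda>x. t * \<pi> x + (t' - t) * \<rho> x + (1 - t') * \<rho> x) = Hh t \<pi>"
      by (rule ext) (simp add: Hh_def \<rho>_def algebra_simps)
    have e2: "(\<lambda>x. t * \<pi>' x + (t' - t) * \<pi>' x + (1 - t') * \<rho>' x) = Hh t' \<pi>'"
      by (rule ext) (simp add: Hh_def \<rho>'_def algebra_simps)
    define \<Theta> where "\<Theta> = (\<lambda>z. t * \<Gamma> z + (t' - t) * \<kappa> z + (1 - t') * \<Gamma>\<rho> z)"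
    have Th: "\<Theta> \<in> couplings (Hh t \<pi>) (Hh t' \<pi>')" using l3(1) False t' e1 e2 by (simp add: \<Theta>_def)
    have "wcost p D \<Theta> = t * C + (t' - t) * wcost p D \<kappa> + (1 - t') * wcost p D \<Gamma>\<rho>"
      using l3(2) False t' by (simp add: \<Theta>_def C_def)
    also have "\<dots> \<le> 1 * C + (t' - t) * (2 powr p * (K0 + 2 * C)) + 1 * (2 * C)"
    proof (intro add_mono mult_mono)
      show "wcost p D \<kappa> \<le> 2 powr p * (K0 + 2 * C)"
        using k2 K0b C0 tp by (smt (verit, best) mult_left_mono)
    qed (use t t' False C0 CGr CGr0 k1 in \<open>auto intro: wcost_nonneg couplings_nonneg\<close>)
    also have "\<dots> = 3 * C + \<bar>t - t'\<bar> * (2 powr p * (K0 + 2 * C))" using False by simp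
    finally show ?thesis using Th by (auto simp: D_def C_def K0_def \<rho>_def)
  qed
qed



theorem proposition5p1:
  fixes X :: "'a set" and d :: "'a \<Rightarrow> 'a \<Rightarrow> real" and V :: "'v set" and K :: "'v set set"
    and \<phi> :: "'a \<Rightarrow> 'v"
    and Y :: "'b set" and e :: "'b \<Rightarrow> 'b \<Rightarrow> real" and W :: "'w set" and L :: "'w set set"
    and \<psi> :: "'b \<Rightarrow> 'w"
    and p :: real
  assumes "1 \<le> p"
    and "smt_obj X d V K \<phi>"
    and "smt_obj Y e W L \<psi>"
  shows "(Metric_space.mtopology (realization X K \<phi> \<times> realization Y L \<psi>)
              (max_dist (wasserstein p d) (wasserstein p e)))
           homotopy_equivalent_space
           (Metric_space.mtopology (realization (X \<times> Y) (prod_sc K L) (\<lambda>(x, y). (\<phi> x, \<psi> y)))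
              (wasserstein p (max_dist d e)))"
proof -
  have p: "1 \<le> p" by fact
  have msX: "Metric_space X d" and scK: "is_simplicial_complex V K" using assms(2) by (auto simp: smt_obj_def)
  have msY: "Metric_space Y e" and scL: "is_simplicial_complex W L" using assms(3) by (auto simp: smt_obj_def)
  define R1 where "R1 = realization X K \<phi>"
  define R2 where "R2 = realization Y L \<psi>"
  define R where "R = realization (X \<times> Y) (prod_sc K L) (\<lambda>(x, y). (\<phi> x, \<psi> y))"
  define D where "D = max_dist d e"
  define WA where "WA = max_dist (wasserstein p d) (wasserstein p e)"
  define WB where "WB = wasserstein p D"
  have WAv: "WA (\<mu>,\<nu>) (\<mu>',\<nu>') = max (wasserstein p d \<mu> \<mu>') (wasserstein p e \<nu> \<nu>')" for \<mu> \<nu> \<mu>' \<nu>'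
    by (simp add: WA_def max_dist_def)
  have DM: "Metric_space (X \<times> Y) D" unfolding D_def by (rule max_metric[OF msX msY])
  have M1: "Metric_space R1 (wasserstein p d)"
    by (rule Metric_space.subspace[OF W_metric[OF msX p]]) (simp add: R1_def real_sub_Pm)
  have M2: "Metric_space R2 (wasserstein p e)"
    by (rule Metric_space.subspace[OF W_metric[OF msY p]]) (simp add: R2_def real_sub_Pm)
  have MA: "Metric_space (R1 \<times> R2) WA" unfolding WA_def by (rule max_metric[OF M1 M2])
  have MB: "Metric_space R WB"
    unfolding WB_def by (rule Metric_space.subspace[OF W_metric[OF DM p]]) (simp add: R_def real_sub_Pm)
  have dnn: "0 \<le> d x y" for x y by (rule Metric_space.nonneg[OF msX])
  have enn: "0 \<le> e x y" for x y by (rule Metric_space.nonneg[OF msY])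
  have p0: "0 \<le> p" "0 < p" using p by auto
  define F :: "('a \<Rightarrow> real) \<times> ('b \<Rightarrow> real) \<Rightarrow> ('a \<times> 'b \<Rightarrow> real)" where "F = (\<lambda>(\<mu>, \<nu>). pm \<mu> \<nu>)"
  define G :: "('a \<times> 'b \<Rightarrow> real) \<Rightarrow> ('a \<Rightarrow> real) \<times> ('b \<Rightarrow> real)" where "G = (\<lambda>\<pi>. (m1 \<pi>, m2 \<pi>))"
  have Fv: "F (\<mu>, \<nu>) = pm \<mu> \<nu>" for \<mu> \<nu> by (simp add: F_def)
  have contF: "continuous_map (Metric_space.mtopology (R1 \<times> R2) WA) (Metric_space.mtopology R WB) F"
  proof (rule cont_mtop[OF MA MB])
    fix x assume "x \<in> R1 \<times> R2" then show "F x \<in> R"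
      by (auto simp: F_def R_def R1_def R2_def intro: pm_real)
  next
    fix x \<epsilon> assume x: "x \<in> R1 \<times> R2" and \<epsilon>: "(0::real) < \<epsilon>"
    obtain \<mu> \<nu> where xv: "x = (\<mu>, \<nu>)" "\<mu> \<in> R1" "\<nu> \<in> R2" using x by auto
    define E where "E = \<epsilon> powr p"
    have E: "0 < E" using \<epsilon> by (simp add: E_def)
    define \<delta> where "\<delta> = (E / 2) powr (1/p)"
    have \<delta>: "0 < \<delta>" using E by (simp add: \<delta>_def)
    have \<delta>p: "\<delta> powr p = E / 2" using E p by (simp add: \<delta>_def powr_powr)
    show "\<exists>\<delta>>0. \<forall>y\<in>R1 \<times> R2. WA x y < \<delta> \<longrightarrow> WB (F x) (F y) < \<epsilon>"
    proof (intro exI[of _ \<delta>] conjI ballI impI)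
      fix y assume y: "y \<in> R1 \<times> R2" and lt: "WA x y < \<delta>"
      obtain \<mu>' \<nu>' where yv: "y = (\<mu>', \<nu>')" "\<mu>' \<in> R1" "\<nu>' \<in> R2" using y by auto
      have pms: "pmeas \<mu>" "pmeas \<nu>" "pmeas \<mu>'" "pmeas \<nu>'" using xv yv by (auto simp: R1_def R2_def intro: real_pmeas)
      have "wasserstein p d \<mu> \<mu>' < \<delta>" "wasserstein p e \<nu> \<nu>' < \<delta>" using lt xv yv by (auto simp: WAv)
      then have "IW p d \<mu> \<mu>' < E / 2" "IW p e \<nu> \<nu>' < E / 2"
        using W_less_iff[OF couplings_ne[OF pms(1,3)] p \<delta>] W_less_iff[OF couplings_ne[OF pms(2,4)] p \<delta>] \<delta>p by auto
      then obtain \<gamma>1 \<gamma>2 where g1: "\<gamma>1 \<in> couplings \<mu> \<mu>'" "wcost p d \<gamma>1 < E/2"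
        and g2: "\<gamma>2 \<in> couplings \<nu> \<nu>'" "wcost p e \<gamma>2 < E/2"
        using IW_approx[OF couplings_ne[OF pms(1,3)]] IW_approx[OF couplings_ne[OF pms(2,4)]] by meson
      note tt = tensor[where d=d and e=e and p=p, OF g1(1) g2(1) pms(1,2) p0(1) dnn enn]
      have "IW p D (pm \<mu> \<nu>) (pm \<mu>' \<nu>') \<le> wcost p D (tc \<gamma>1 \<gamma>2)" by (rule IW_le[OF tt(1)])
      also have "\<dots> < E" using tt(2) g1(2) g2(2) by (simp add: D_def)
      finally have "IW p D (pm \<mu> \<nu>) (pm \<mu>' \<nu>') < E" .
      moreover have "pmeas (pm \<mu> \<nu>)" by (rule real_pmeas[OF pm_real]) (use xv in \<open>auto simp: R1_def R2_def\<close>)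
      moreover have "pmeas (pm \<mu>' \<nu>')" by (rule real_pmeas[OF pm_real]) (use yv in \<open>auto simp: R1_def R2_def\<close>)
      ultimately show "WB (F x) (F y) < \<epsilon>"
        using W_less_iff[OF couplings_ne p \<epsilon>, of "pm \<mu> \<nu>" "pm \<mu>' \<nu>'" D] xv yv
        by (simp add: WB_def Fv E_def)
    qed (rule \<delta>)
  qed
  have contG: "continuous_map (Metric_space.mtopology R WB) (Metric_space.mtopology (R1 \<times> R2) WA) G"
  proof (rule cont_mtop[OF MB MA])
    fix x assume "x \<in> R" then show "G x \<in> R1 \<times> R2"
      using m_real by (auto simp: G_def R_def R1_def R2_def)
  next
    fix \<pi> \<epsilon> assume pi: "\<pi> \<in> R" and \<epsilon>: "(0::real) < \<epsilon>"
    show "\<exists>\<delta>>0. \<forall>\<pi>'\<in>R. WB \<pi> \<pi>' < \<delta> \<longrightarrow> WA (G \<pi>) (G \<pi>') < \<epsilon>"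
    proof (intro exI[of _ \<epsilon>] conjI ballI impI)
      fix \<pi>' assume pi': "\<pi>' \<in> R" and lt: "WB \<pi> \<pi>' < \<epsilon>"
      have pms: "pmeas \<pi>" "pmeas \<pi>'" using pi pi' by (auto simp: R_def intro: real_pmeas)
      have pms2: "pmeas (m1 \<pi>)" "pmeas (m1 \<pi>')" "pmeas (m2 \<pi>)" "pmeas (m2 \<pi>')"
        using real_pmeas[OF m_real(1)[OF pi[unfolded R_def]]] real_pmeas[OF m_real(1)[OF pi'[unfolded R_def]]]
          real_pmeas[OF m_real(2)[OF pi[unfolded R_def]]] real_pmeas[OF m_real(2)[OF pi'[unfolded R_def]]] by auto
      have "IW p D \<pi> \<pi>' < \<epsilon> powr p" using lt W_less_iff[OF couplings_ne[OF pms] p \<epsilon>] by (simp add: WB_def)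
      then obtain \<Gamma> where G1: "\<Gamma> \<in> couplings \<pi> \<pi>'" "wcost p D \<Gamma> < \<epsilon> powr p"
        using IW_approx[OF couplings_ne[OF pms]] by meson
      note q1 = push1[where d=d and e=e and p=p, OF G1(1) p0(1) dnn enn]
      note q2 = push2[where d=d and e=e and p=p, OF G1(1) p0(1) dnn enn]
      have "IW p d (m1 \<pi>) (m1 \<pi>') < \<epsilon> powr p" using IW_le[OF q1(1), of p d] q1(2) G1(2) unfolding D_def by linarith
      then have a: "wasserstein p d (m1 \<pi>) (m1 \<pi>') < \<epsilon>" using W_less_iff[OF couplings_ne[OF pms2(1,2)] p \<epsilon>] by simp
      have "IW p e (m2 \<pi>) (m2 \<pi>') < \<epsilon> powr p" using IW_le[OF q2(1), of p e] q2(2) G1(2) unfolding D_def by linarith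
      then have b: "wasserstein p e (m2 \<pi>) (m2 \<pi>') < \<epsilon>" using W_less_iff[OF couplings_ne[OF pms2(3,4)] p \<epsilon>] by simp
      show "WA (G \<pi>) (G \<pi>') < \<epsilon>" using a b by (simp add: G_def WAv)
    qed (rule \<epsilon>)
  qed
  have h1: "homotopic_with (\<lambda>x. True) (Metric_space.mtopology (R1 \<times> R2) WA) (Metric_space.mtopology (R1 \<times> R2) WA) (G \<circ> F) id"
  proof (rule homotopic_with_equal)
    show "continuous_map (Metric_space.mtopology (R1 \<times> R2) WA) (Metric_space.mtopology (R1 \<times> R2) WA) (G \<circ> F)"
      by (rule continuous_map_compose[OF contF contG])
    fix x assume "x \<in> topspace (Metric_space.mtopology (R1 \<times> R2) WA)"
    then obtain \<mu> \<nu> where xv: "x = (\<mu>, \<nu>)" "\<mu> \<in> R1" "\<nu> \<in> R2" using mtop_topspace[OF MA] by auto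
    have pms: "pmeas \<mu>" "pmeas \<nu>" using xv by (auto simp: R1_def R2_def intro: real_pmeas)
    show "(G \<circ> F) x = id x" using xv m1_pm[OF pms] m2_pm[OF pms] by (simp add: G_def F_def)
  qed auto
  have h2: "homotopic_with (\<lambda>x. True) (Metric_space.mtopology R WB) (Metric_space.mtopology R WB) (F \<circ> G) id"
    unfolding homotopic_with_def
  proof (intro exI[of _ "\<lambda>z. Hh (fst z) (snd z)"] conjI allI ballI)
    show "Hh (fst (0::real, x)) (snd (0::real, x)) = (F \<circ> G) x" for x
      by (rule ext) (simp add: Hh_def F_def G_def)
    show "Hh (fst (1::real, x)) (snd (1::real, x)) = id x" for x
      by (rule ext) (simp add: Hh_def)
    show "continuous_map (prod_topology (top_of_set {0..1}) (Metric_space.mtopology R WB)) (Metric_space.mtopology R WB)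
        (\<lambda>z. Hh (fst z) (snd z))"
    proof (rule cont_prod01[OF MB MB])
      fix x r assume x: "x \<in> R" and r: "(0::real) < r"
      show "\<exists>s>0. \<forall>y\<in>R. WB x y < s \<longrightarrow> (\<exists>\<eta>>0. \<forall>z\<in>R. WB y z < \<eta> \<longrightarrow> WB x z < r)"
      proof (rule exI[of _ "r/2"], intro conjI ballI impI)
        fix y assume y: "y \<in> R" and xy: "WB x y < r/2"
        show "\<exists>\<eta>>0. \<forall>z\<in>R. WB y z < \<eta> \<longrightarrow> WB x z < r"
        proof (intro exI[of _ "r/2"] conjI ballI impI)
          fix z assume z: "z \<in> R" and yz: "WB y z < r/2"
          have "WB x z \<le> WB x y + WB y z" by (rule Metric_space.triangle[OF MB x y z])
          then show "WB x z < r" using xy yz by simp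
        qed (use r in simp)
      qed (use r in simp)
    next
      fix y assume "y \<in> R" then show "WB y y = 0" using Metric_space.zero[OF MB] by simp
    next
      fix t x assume "t \<in> {0::real..1}" "x \<in> R"
      then show "Hh (fst (t, x)) (snd (t, x)) \<in> R" using H_real[OF scK scL] by (auto simp: R_def)
    next
      fix t \<pi> \<epsilon> assume t: "t \<in> {0::real..1}" and pi: "\<pi> \<in> R" and \<epsilon>: "(0::real) < \<epsilon>"
      define \<rho> where "\<rho> = pm (m1 \<pi>) (m2 \<pi>)"
      define K0 where "K0 = max (wcost p D (pm \<pi> \<rho>)) (wcost p D (pm \<rho> \<pi>))"
      have pmpi: "pmeas \<pi>" using pi by (auto simp: R_def intro: real_pmeas)
      have pmrho: "pmeas \<rho>" unfolding \<rho>_def using pm_real[OF m_real[OF pi[unfolded R_def]]] by (rule real_pmeas)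
      have K0: "0 \<le> K0" unfolding K0_def
        by (rule order.trans[OF _ max.cobounded1], rule wcost_nonneg, rule couplings_nonneg[OF pm_coupling[OF pmpi pmrho]])
      define E where "E = \<epsilon> powr p"
      have E: "0 < E" using \<epsilon> by (simp add: E_def)
      define M where "M = 2 powr p * (K0 + 2)"
      have M: "0 < M" using K0 by (simp add: M_def)
      define \<eta> where "\<eta> = min 1 (E / 6)"
      have \<eta>: "0 < \<eta>" "\<eta> \<le> 1" "\<eta> \<le> E / 6" using E by (auto simp: \<eta>_def)
      define \<tau> where "\<tau> = E / (3 * M)"
      have \<tau>: "0 < \<tau>" using E M by (simp add: \<tau>_def)
      have \<tau>M: "\<tau> * M = E / 3" using M by (simp add: \<tau>_def)
      define \<delta> where "\<delta> = min \<tau> (\<eta> powr (1/p))"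
      have \<delta>: "0 < \<delta>" using \<tau> \<eta> by (simp add: \<delta>_def)
      show "\<exists>\<delta>>0. \<forall>t'\<in>{0..1}. \<forall>\<pi>'\<in>R. \<bar>t' - t\<bar> < \<delta> \<longrightarrow> WB \<pi> \<pi>' < \<delta> \<longrightarrow>
              WB (Hh (fst (t, \<pi>)) (snd (t, \<pi>))) (Hh (fst (t', \<pi>')) (snd (t', \<pi>'))) < \<epsilon>"
      proof (intro exI[of _ \<delta>] conjI ballI impI)
        fix t' \<pi>' assume t': "t' \<in> {0::real..1}" and pi': "\<pi>' \<in> R" and tt: "\<bar>t' - t\<bar> < \<delta>" and lt: "WB \<pi> \<pi>' < \<delta>"
        have pmpi': "pmeas \<pi>'" using pi' by (auto simp: R_def intro: real_pmeas)
        have "WB \<pi> \<pi>' < \<eta> powr (1/p)" using lt by (simp add: \<delta>_def)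
        moreover have "(\<eta> powr (1/p)) powr p = \<eta>" using \<eta> p by (simp add: powr_powr)
        ultimately have "IW p D \<pi> \<pi>' < \<eta>"
          using W_less_iff[OF couplings_ne[OF pmpi pmpi'] p, of "\<eta> powr (1/p)" D] \<eta> by (simp add: WB_def)
        then obtain \<Gamma> where G1: "\<Gamma> \<in> couplings \<pi> \<pi>'" "wcost p D \<Gamma> < \<eta>"
          using IW_approx[OF couplings_ne[OF pmpi pmpi']] by meson
        have C0: "0 \<le> wcost p D \<Gamma>" by (rule wcost_nonneg, rule couplings_nonneg[OF G1(1)])
        obtain \<Theta> where Th: "\<Theta> \<in> couplings (Hh t \<pi>) (Hh t' \<pi>')"
          "wcost p D \<Theta> \<le> 3 * wcost p D \<Gamma> + \<bar>t - t'\<bar> * (2 powr p * (K0 + 2 * wcost p D \<Gamma>))"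
          using H_est[OF msX msY p pi[unfolded R_def] pi'[unfolded R_def] G1(1)] t t'
          by (auto simp: D_def K0_def \<rho>_def)
        have "\<bar>t - t'\<bar> * (2 powr p * (K0 + 2 * wcost p D \<Gamma>)) \<le> \<tau> * M"
        proof (rule mult_mono)
          show "\<bar>t - t'\<bar> \<le> \<tau>" using tt by (simp add: \<delta>_def abs_minus_commute)
          show "2 powr p * (K0 + 2 * wcost p D \<Gamma>) \<le> M" unfolding M_def using G1(2) \<eta> by simp
        qed (use \<tau> C0 K0 in auto)
        then have "wcost p D \<Theta> < E"
          using Th(2) G1(2) \<eta> \<tau>M by linarith
        then have "IW p D (Hh t \<pi>) (Hh t' \<pi>') < E" using IW_le[OF Th(1), of p D] by linarith
        moreover have "pmeas (Hh t \<pi>)"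
          by (rule real_pmeas[OF H_real[OF scK scL pi[unfolded R_def]]]) (use t in auto)
        moreover have "pmeas (Hh t' \<pi>')"
          by (rule real_pmeas[OF H_real[OF scK scL pi'[unfolded R_def]]]) (use t' in auto)
        ultimately show "WB (Hh (fst (t, \<pi>)) (snd (t, \<pi>))) (Hh (fst (t', \<pi>')) (snd (t', \<pi>'))) < \<epsilon>"
          using W_less_iff[OF couplings_ne p \<epsilon>, of "Hh t \<pi>" "Hh t' \<pi>'" D] by (simp add: WB_def E_def)
      qed (rule \<delta>)
    qed
  qed auto
  show ?thesis
    unfolding homotopy_equivalent_space_def
    using contF contG h1 h2 by (auto simp: R1_def R2_def R_def WA_def WB_def D_def)
qed

end
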